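(* Let $\mathcal{R}=(X,\Phi,\check X,\check\Phi)$ be a semisimple root datum, $\mathcal{T}=(T,\emptyset,\check T,\emptyset)$ a torus, $A$ a finite $\mathbb{Z}$-module, and $h_1:X\to A$, $h_2:T\to A$ surjective homomorphisms with $\Phi\subseteq\ker h_1$. Let $\mathcal{R}'=\mathcal{R}\oplus_{(A,h_1,h_2)}\mathcal{T}=(B,\Phi',\check B,\check\Phi')$ with projections $p_1:B\to X$, $p_2:B\to T$. Then: (a) $\ker(p_1)=\check\Phi'^\perp$, so $p_1$ induces an isomorphism of root data $\mathcal{R}'_{\mathrm{der}}\to\mathcal{R}$; (b) $\ker(p_2)=\Phi'^\top$, so $p_2$ induces an isomorphism of root data $\mathcal{R}'_{\mathrm{rad}}\to\mathcal{T}$; (c) $\ker(h_1\circ p_1)=\ker(h_2\circ p_2)=\Phi'^\top\oplus\check\Phi'^\perp$, so $h_1\circ p_1=h_2\circ p_2$ induces an isomorphism of abelian groups $B/(\Phi'^\top\oplus\check\Phi'^\perp)\to A$.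
   Context: Root data are reduced quadruples $(X,\Phi,\check X,\check\Phi)$ with perfect pairing; a torus is a root datum with no roots; semisimple means $\mathbb{Q}\Phi=\mathbb{Q}\otimes X$. For $S\subseteq X$: $S^\top=\{x\in X: nx\in\mathbb{Z}S$ for some $n>0\}$, $S^\perp=\{y\in\check X:\langle x,y\rangle=0\ \forall x\in S\}$; similarly for subsets of $\check X$. $\mathcal{R}_{\mathrm{rad}}=(X/\Phi^\top,\emptyset,\check\Phi^\perp,\emptyset)$ and $\mathcal{R}_{\mathrm{der}}=(X/\check\Phi^\perp,\Phi,\check\Phi^\top,\check\Phi)$. Induced datum for a submodule $B\supseteq\Phi$: $(B,\Phi,\mathrm{Hom}(B,\mathbb{Z}),\check\iota_B(\check\Phi))$, $\check\iota_B(y)=\langle-,y\rangle|_B$. Central product $\mathcal{R}_1\oplus_{(A,h_1,h_2)}\mathcal{R}_2$ (for surjections $h_i:X_i\to A$ killing roots): the datum induced from the direct sum $\mathcal{R}_1\oplus\mathcal{R}_2$ by $\{(x_1,x_2)\in X_1\oplus X_2:h_1(x_1)=h_2(x_2)\}$. *)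

theory Defs
  imports "HOL-Algebra.Algebra"
begin

text \<open>Z-modules are modelled as commutative groups in the HOL-Algebra sense
(group law written multiplicatively, integer multiples are integer powers).\<close>

record ('a, 'b) root_datum =
  rd_X    :: "'a monoid"
  rd_Phi  :: "'a set"
  rd_Xc   :: "'b monoid"
  rd_Phic :: "'b set"
  rd_pair :: "'a \<Rightarrow> 'b \<Rightarrow> int"

definition homZ :: "('a, 'm) monoid_scheme \<Rightarrow> ('a \<Rightarrow> int) set" where
  "homZ G = {f. f \<in> extensional (carrier G) \<and>
      (\<forall>x\<in>carrier G. \<forall>y\<in>carrier G. f (x \<otimes>\<^bsub>G\<^esub> y) = f x + f y)}"

definition homZ_group :: "('a, 'm) monoid_scheme \<Rightarrow> ('a \<Rightarrow> int) monoid" where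
  "homZ_group G = \<lparr>carrier = homZ G,
      monoid.mult = (\<lambda>f g. restrict (\<lambda>x. f x + g x) (carrier G)),
      monoid.one = restrict (\<lambda>x. 0) (carrier G)\<rparr>"

definition fin_gen :: "('a, 'm) monoid_scheme \<Rightarrow> bool" where
  "fin_gen G \<longleftrightarrow> (\<exists>S. finite S \<and> S \<subseteq> carrier G \<and> generate G S = carrier G)"

definition refl_X :: "('a, 'b) root_datum \<Rightarrow> 'a \<Rightarrow> 'b \<Rightarrow> 'a \<Rightarrow> 'a" where
  "refl_X R a ca x = x \<otimes>\<^bsub>rd_X R\<^esub> (a [^]\<^bsub>rd_X R\<^esub> (- rd_pair R x ca))"

definition refl_Xc :: "('a, 'b) root_datum \<Rightarrow> 'a \<Rightarrow> 'b \<Rightarrow> 'b \<Rightarrow> 'b" where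
  "refl_Xc R a ca y = y \<otimes>\<^bsub>rd_Xc R\<^esub> (ca [^]\<^bsub>rd_Xc R\<^esub> (- rd_pair R a y))"

text \<open>(Reduced) root datum: free f.g. Z-modules X, X^vee in perfect pairing, finite
root set Phi with a bijection to the coroots satisfying the usual axioms.\<close>
definition root_datum :: "('a, 'b) root_datum \<Rightarrow> bool" where
  "root_datum R \<longleftrightarrow>
     comm_group (rd_X R) \<and> comm_group (rd_Xc R) \<and>
     fin_gen (rd_X R) \<and> fin_gen (rd_Xc R) \<and>
     (\<forall>x\<in>carrier (rd_X R). \<forall>x'\<in>carrier (rd_X R). \<forall>y\<in>carrier (rd_Xc R).
         rd_pair R (x \<otimes>\<^bsub>rd_X R\<^esub> x') y = rd_pair R x y + rd_pair R x' y) \<and>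
     (\<forall>x\<in>carrier (rd_X R). \<forall>y\<in>carrier (rd_Xc R). \<forall>y'\<in>carrier (rd_Xc R).
         rd_pair R x (y \<otimes>\<^bsub>rd_Xc R\<^esub> y') = rd_pair R x y + rd_pair R x y') \<and>
     bij_betw (\<lambda>x. restrict (rd_pair R x) (carrier (rd_Xc R))) (carrier (rd_X R)) (homZ (rd_Xc R)) \<and>
     bij_betw (\<lambda>y. restrict (\<lambda>x. rd_pair R x y) (carrier (rd_X R))) (carrier (rd_Xc R)) (homZ (rd_X R)) \<and>
     finite (rd_Phi R) \<and> rd_Phi R \<subseteq> carrier (rd_X R) \<and> rd_Phic R \<subseteq> carrier (rd_Xc R) \<and>
     (\<exists>c. bij_betw c (rd_Phi R) (rd_Phic R) \<and>
        (\<forall>a\<in>rd_Phi R. rd_pair R a (c a) = 2 \<and>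
           refl_X R a (c a) ` rd_Phi R = rd_Phi R \<and>
           refl_Xc R a (c a) ` rd_Phic R = rd_Phic R)) \<and>
     (\<forall>a\<in>rd_Phi R. a \<otimes>\<^bsub>rd_X R\<^esub> a \<notin> rd_Phi R)"

definition rd_torus :: "('a, 'b) root_datum \<Rightarrow> bool" where
  "rd_torus R \<longleftrightarrow> rd_Phi R = {} \<and> rd_Phic R = {}"

definition top_X :: "('a, 'b) root_datum \<Rightarrow> 'a set \<Rightarrow> 'a set" where
  "top_X R S = {x \<in> carrier (rd_X R). \<exists>n::nat. n > 0 \<and> x [^]\<^bsub>rd_X R\<^esub> n \<in> generate (rd_X R) S}"

definition top_Xc :: "('a, 'b) root_datum \<Rightarrow> 'b set \<Rightarrow> 'b set" where
  "top_Xc R S = {y \<in> carrier (rd_Xc R). \<exists>n::nat. n > 0 \<and> y [^]\<^bsub>rd_Xc R\<^esub> n \<in> generate (rd_Xc R) S}"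

definition perp_X :: "('a, 'b) root_datum \<Rightarrow> 'a set \<Rightarrow> 'b set" where
  "perp_X R S = {y \<in> carrier (rd_Xc R). \<forall>x\<in>S. rd_pair R x y = 0}"

definition perp_Xc :: "('a, 'b) root_datum \<Rightarrow> 'b set \<Rightarrow> 'a set" where
  "perp_Xc R S = {x \<in> carrier (rd_X R). \<forall>y\<in>S. rd_pair R x y = 0}"

text \<open>Semisimple: Q Phi = Q \<otimes> X, i.e. every x has a nonzero multiple in Z Phi.\<close>
definition semisimple :: "('a, 'b) root_datum \<Rightarrow> bool" where
  "semisimple R \<longleftrightarrow> top_X R (rd_Phi R) = carrier (rd_X R)"

definition quot_pair :: "('a, 'b) root_datum \<Rightarrow> 'a set \<Rightarrow> 'b \<Rightarrow> int" where
  "quot_pair R C y = rd_pair R (SOME x. x \<in> C) y"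

definition rd_rad :: "('a, 'b) root_datum \<Rightarrow> ('a set, 'b) root_datum" where
  "rd_rad R = \<lparr>rd_X = rd_X R Mod top_X R (rd_Phi R), rd_Phi = {},
      rd_Xc = (rd_Xc R)\<lparr>carrier := perp_X R (rd_Phi R)\<rparr>, rd_Phic = {},
      rd_pair = quot_pair R\<rparr>"

definition rd_der :: "('a, 'b) root_datum \<Rightarrow> ('a set, 'b) root_datum" where
  "rd_der R = \<lparr>rd_X = rd_X R Mod perp_Xc R (rd_Phic R),
      rd_Phi = (\<lambda>a. perp_Xc R (rd_Phic R) #>\<^bsub>rd_X R\<^esub> a) ` rd_Phi R,
      rd_Xc = (rd_Xc R)\<lparr>carrier := top_Xc R (rd_Phic R)\<rparr>, rd_Phic = rd_Phic R,
      rd_pair = quot_pair R\<rparr>"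

definition rd_sum :: "('a, 'b) root_datum \<Rightarrow> ('c, 'd) root_datum \<Rightarrow> ('a \<times> 'c, 'b \<times> 'd) root_datum" where
  "rd_sum R1 R2 = \<lparr>rd_X = rd_X R1 \<times>\<times> rd_X R2,
      rd_Phi = (\<lambda>a. (a, \<one>\<^bsub>rd_X R2\<^esub>)) ` rd_Phi R1 \<union> (\<lambda>a. (\<one>\<^bsub>rd_X R1\<^esub>, a)) ` rd_Phi R2,
      rd_Xc = rd_Xc R1 \<times>\<times> rd_Xc R2,
      rd_Phic = (\<lambda>a. (a, \<one>\<^bsub>rd_Xc R2\<^esub>)) ` rd_Phic R1 \<union> (\<lambda>a. (\<one>\<^bsub>rd_Xc R1\<^esub>, a)) ` rd_Phic R2,
      rd_pair = (\<lambda>(x1, x2) (y1, y2). rd_pair R1 x1 y1 + rd_pair R2 x2 y2)\<rparr>"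

definition rd_induced :: "('a, 'b) root_datum \<Rightarrow> 'a set \<Rightarrow> ('a, 'a \<Rightarrow> int) root_datum" where
  "rd_induced R B = \<lparr>rd_X = (rd_X R)\<lparr>carrier := B\<rparr>, rd_Phi = rd_Phi R,
      rd_Xc = homZ_group ((rd_X R)\<lparr>carrier := B\<rparr>),
      rd_Phic = (\<lambda>y. restrict (\<lambda>x. rd_pair R x y) B) ` rd_Phic R,
      rd_pair = (\<lambda>x f. f x)\<rparr>"

definition central_prod ::
  "('a, 'b) root_datum \<Rightarrow> ('c, 'd) root_datum \<Rightarrow> ('a \<Rightarrow> 'e) \<Rightarrow> ('c \<Rightarrow> 'e)
     \<Rightarrow> ('a \<times> 'c, 'a \<times> 'c \<Rightarrow> int) root_datum" where
  "central_prod R1 R2 h1 h2 =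
     rd_induced (rd_sum R1 R2)
       {(x1, x2). x1 \<in> carrier (rd_X R1) \<and> x2 \<in> carrier (rd_X R2) \<and> h1 x1 = h2 x2}"

definition rd_iso :: "('a, 'b) root_datum \<Rightarrow> ('c, 'd) root_datum \<Rightarrow> ('a \<Rightarrow> 'c) \<Rightarrow> bool" where
  "rd_iso R1 R2 f \<longleftrightarrow> f \<in> iso (rd_X R1) (rd_X R2) \<and> f ` rd_Phi R1 = rd_Phi R2 \<and>
     (\<exists>g. g \<in> iso (rd_Xc R2) (rd_Xc R1) \<and> g ` rd_Phic R2 = rd_Phic R1 \<and>
        (\<forall>x\<in>carrier (rd_X R1). \<forall>y\<in>carrier (rd_Xc R2). rd_pair R1 x (g y) = rd_pair R2 (f x) y))"

definition induced_map :: "('a \<Rightarrow> 'c) \<Rightarrow> 'a set \<Rightarrow> 'c" where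
  "induced_map h C = the_elem (h ` C)"

end

theory Submission
  imports Defs Complex_Main "HOL-Library.Function_Algebras"
begin

definition fs :: "rat \<Rightarrow> ('i \<Rightarrow> rat) \<Rightarrow> ('i \<Rightarrow> rat)" where
  "fs c f = (\<lambda>i. c * f i)"

lemma vs_fs: "vector_space (fs :: rat \<Rightarrow> ('i \<Rightarrow> rat) \<Rightarrow> _)"
  by unfold_locales (auto simp: fs_def fun_eq_iff algebra_simps)

lemma vs_rat: "vector_space ((*) :: rat \<Rightarrow> rat \<Rightarrow> rat)"
  by unfold_locales (auto simp: algebra_simps)

lemma vsp: "vector_space_pair (fs :: rat \<Rightarrow> ('i \<Rightarrow> rat) \<Rightarrow> _) ((*) :: rat \<Rightarrow> rat \<Rightarrow> rat)"
  by (simp add: vector_space_pair_def vs_fs vs_rat)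

lemma sep:
  fixes S :: "('i \<Rightarrow> rat) set" and d :: "'i \<Rightarrow> rat"
  assumes "d \<notin> module.span fs S"
  shows "\<exists>f. Vector_Spaces.linear fs ((*)::rat\<Rightarrow>rat\<Rightarrow>rat) f \<and> (\<forall>v\<in>S. f v = 0) \<and> f d = 1"
proof -
  interpret V: vector_space "fs :: rat \<Rightarrow> ('i \<Rightarrow> rat) \<Rightarrow> _" by (rule vs_fs)
  interpret P: vector_space_pair "fs :: rat \<Rightarrow> ('i \<Rightarrow> rat) \<Rightarrow> _" "((*) :: rat \<Rightarrow> rat \<Rightarrow> rat)" by (rule vsp)
  obtain B where B: "B \<subseteq> S" "V.independent B" "S \<subseteq> V.span B"
    using V.maximal_independent_subset by blast
  have dB: "d \<notin> V.span B" using assms B(1) V.span_mono by blast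
  have ind: "V.independent (insert d B)" using V.independent_insertI[OF dB B(2)] .
  obtain f where f: "Vector_Spaces.linear fs (*) f" "\<forall>x\<in>insert d B. f x = (if x = d then 1 else 0)"
    using P.linear_independent_extend[OF ind, of "\<lambda>x. if x = d then 1 else 0"] by blast
  have "\<forall>v\<in>V.span B. f v = 0"
  proof
    fix v assume "v \<in> V.span B"
    then show "f v = 0"
    proof (induction rule: V.span_induct_alt)
      case base then show ?case using P.linear_0[OF f(1)] by (simp add: zero_fun_def)
    next
      case (step c x y) 
      have "x \<noteq> d" using step dB V.span_base by blast
      have "f (fs c x + y) = c * f x + f y"
        by (simp only: P.linear_add[OF f(1)] P.linear_scale[OF f(1)])
      then show ?case using step f \<open>x \<noteq> d\<close> by (simp del: plus_fun_apply)
    qed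
  qed
  then show ?thesis using f B(3) by (intro exI[of _ f]) auto
qed

lemma sum_apply: "(\<Sum>i\<in>A. f i) (x::'c) = (\<Sum>i\<in>A. f i x)"
  by (induct A rule: infinite_finite_induct) auto

lemma lin_repr:
  fixes f :: "('i \<Rightarrow> rat) \<Rightarrow> rat"
  assumes lin: "Vector_Spaces.linear fs ((*)::rat\<Rightarrow>rat\<Rightarrow>rat) f" and I: "finite I"
    and v: "\<forall>i. i \<notin> I \<longrightarrow> v i = 0"
  shows "f v = (\<Sum>i\<in>I. v i * f (\<lambda>j. if j = i then 1 else 0))"
proof -
  interpret P: vector_space_pair "fs :: rat \<Rightarrow> ('i \<Rightarrow> rat) \<Rightarrow> _" "((*) :: rat \<Rightarrow> rat \<Rightarrow> rat)" by (rule vsp)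
  have "v = (\<Sum>i\<in>I. fs (v i) (\<lambda>j. if j = i then 1 else 0))"
  proof
    fix k show "v k = (\<Sum>i\<in>I. fs (v i) (\<lambda>j. if j = i then 1 else 0)) k"
      using I v by (cases "k \<in> I") (auto simp: fs_def sum_apply if_distrib cong: if_cong)
  qed
  then have "f v = f (\<Sum>i\<in>I. fs (v i) (\<lambda>j. if j = i then 1 else 0))" by simp
  also have "\<dots> = (\<Sum>i\<in>I. f (fs (v i) (\<lambda>j. if j = i then 1 else 0)))"
    by (rule P.linear_sum[OF lin])
  also have "\<dots> = (\<Sum>i\<in>I. v i * f (\<lambda>j. if j = i then 1 else 0))"
    by (simp only: P.linear_scale[OF lin])
  finally show ?thesis .
qed

lemma fredholm:
  fixes C :: "'i \<Rightarrow> 'j \<Rightarrow> rat" and d :: "'i \<Rightarrow> rat"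
  assumes I: "finite I" and J: "finite J"
    and H: "\<And>m. (\<forall>j\<in>J. (\<Sum>i\<in>I. m i * C i j) = 0) \<Longrightarrow> (\<Sum>i\<in>I. m i * d i) = 0"
  shows "\<exists>r. \<forall>i\<in>I. (\<Sum>j\<in>J. r j * C i j) = d i"
proof -
  interpret V: vector_space "fs :: rat \<Rightarrow> ('i \<Rightarrow> rat) \<Rightarrow> _" by (rule vs_fs)
  define col where "col j = (\<lambda>i. if i \<in> I then C i j else 0)" for j
  define d' where "d' = (\<lambda>i. if i \<in> I then d i else 0)"
  define T where "T = range (\<lambda>r. \<Sum>j\<in>J. fs (r j) (col j))"
  have sub: "V.subspace T"
    unfolding V.subspace_def T_def
  proof (intro conjI ballI allI)
    show "0 \<in> range (\<lambda>r. \<Sum>j\<in>J. fs (r j) (col j))"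
      by (rule image_eqI[of _ _ "\<lambda>_. 0"]) (auto simp: fs_def zero_fun_def)
  next
    fix x y assume "x \<in> range (\<lambda>r. \<Sum>j\<in>J. fs (r j) (col j))" "y \<in> range (\<lambda>r. \<Sum>j\<in>J. fs (r j) (col j))"
    then obtain r r' where "x = (\<Sum>j\<in>J. fs (r j) (col j))" "y = (\<Sum>j\<in>J. fs (r' j) (col j))" by auto
    then show "x + y \<in> range (\<lambda>r. \<Sum>j\<in>J. fs (r j) (col j))"
      by (intro image_eqI[of _ _ "\<lambda>j. r j + r' j"]) (simp_all add: fun_eq_iff sum_apply fs_def distrib_right sum.distrib)
  next
    fix c x assume "x \<in> range (\<lambda>r. \<Sum>j\<in>J. fs (r j) (col j))"
    then obtain r where "x = (\<Sum>j\<in>J. fs (r j) (col j))" by auto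
    then show "fs c x \<in> range (\<lambda>r. \<Sum>j\<in>J. fs (r j) (col j))"
      by (intro image_eqI[of _ _ "\<lambda>j. c * r j"]) (simp_all add: fun_eq_iff sum_apply fs_def sum_distrib_left mult.assoc)
  qed
  have colT: "col ` J \<subseteq> T"
  proof
    fix x assume "x \<in> col ` J"
    then obtain j0 where j0: "j0 \<in> J" "x = col j0" by auto
    have eq: "(\<Sum>j\<in>J. fs (if j = j0 then 1 else 0) (col j)) = col j0"
    proof
      fix k
      have "(\<Sum>j\<in>J. fs (if j = j0 then 1 else 0) (col j)) k = (\<Sum>j\<in>J. if j = j0 then col j k else 0)"
        unfolding sum_apply by (rule sum.cong) (auto simp: fs_def)
      also have "\<dots> = col j0 k" using J j0(1) by simp
      finally show "(\<Sum>j\<in>J. fs (if j = j0 then 1 else 0) (col j)) k = col j0 k" .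
    qed
    show "x \<in> T" unfolding T_def j0(2)
      by (rule image_eqI[where x="\<lambda>j. if j = j0 then 1 else 0" and f="\<lambda>r. \<Sum>j\<in>J. fs (r j) (col j)", OF eq[symmetric] UNIV_I])
  qed
  show ?thesis
  proof (cases "d' \<in> V.span (col ` J)")
    case True
    then have "d' \<in> T" using V.span_minimal[OF colT sub] by blast
    then obtain r where r: "d' = (\<Sum>j\<in>J. fs (r j) (col j))" unfolding T_def by auto
    show ?thesis
    proof (intro exI ballI)
      fix i assume i: "i \<in> I"
      have "d i = d' i" using i by (simp add: d'_def)
      also have "\<dots> = (\<Sum>j\<in>J. r j * C i j)" using i by (simp add: r sum_apply fs_def col_def)
      finally show "(\<Sum>j\<in>J. r j * C i j) = d i" by simp
    qed
  next
    case False
    from sep[OF False] obtain f where f: "Vector_Spaces.linear fs ((*)::rat\<Rightarrow>rat\<Rightarrow>rat) f"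
      "\<forall>v\<in>col ` J. f v = 0" "f d' = 1" by blast
    define m where "m i = f (\<lambda>k. if k = i then 1 else 0)" for i
    have "\<forall>j\<in>J. (\<Sum>i\<in>I. m i * C i j) = 0"
    proof
      fix j assume j: "j \<in> J"
      have "f (col j) = (\<Sum>i\<in>I. col j i * m i)"
        unfolding m_def by (rule lin_repr[OF f(1) I]) (simp add: col_def)
      also have "\<dots> = (\<Sum>i\<in>I. m i * C i j)" by (auto simp: col_def intro!: sum.cong)
      finally show "(\<Sum>i\<in>I. m i * C i j) = 0" using f(2) j by simp
    qed
    then have "(\<Sum>i\<in>I. m i * d i) = 0" by (rule H)
    moreover have "f d' = (\<Sum>i\<in>I. d' i * m i)"
      unfolding m_def by (rule lin_repr[OF f(1) I]) (simp add: d'_def)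
    moreover have "(\<Sum>i\<in>I. d' i * m i) = (\<Sum>i\<in>I. m i * d i)" by (auto simp: d'_def intro!: sum.cong)
    ultimately show ?thesis using f(3) by simp
  qed
qed



lemma rdD0:
  assumes "root_datum R"
  shows "comm_group (rd_X R)" "comm_group (rd_Xc R)"
    "\<forall>x\<in>carrier (rd_X R). \<forall>x'\<in>carrier (rd_X R). \<forall>y\<in>carrier (rd_Xc R).
         rd_pair R (x \<otimes>\<^bsub>rd_X R\<^esub> x') y = rd_pair R x y + rd_pair R x' y"
    "\<forall>x\<in>carrier (rd_X R). \<forall>y\<in>carrier (rd_Xc R). \<forall>y'\<in>carrier (rd_Xc R).
         rd_pair R x (y \<otimes>\<^bsub>rd_Xc R\<^esub> y') = rd_pair R x y + rd_pair R x y'"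
    "bij_betw (\<lambda>x. restrict (rd_pair R x) (carrier (rd_Xc R))) (carrier (rd_X R)) (homZ (rd_Xc R))"
    "bij_betw (\<lambda>y. restrict (\<lambda>x. rd_pair R x y) (carrier (rd_X R))) (carrier (rd_Xc R)) (homZ (rd_X R))"
    "finite (rd_Phi R)" "rd_Phi R \<subseteq> carrier (rd_X R)" "rd_Phic R \<subseteq> carrier (rd_Xc R)"
    "\<exists>c. bij_betw c (rd_Phi R) (rd_Phic R) \<and>
        (\<forall>a\<in>rd_Phi R. rd_pair R a (c a) = 2 \<and>
           refl_X R a (c a) ` rd_Phi R = rd_Phi R \<and>
           refl_Xc R a (c a) ` rd_Phic R = rd_Phic R)"
  using assms unfolding root_datum_def
  apply -
  apply (elim conjE, assumption)+
  done

lemma rdD: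
  assumes "root_datum R"
  shows "comm_group (rd_X R)" "comm_group (rd_Xc R)"
    "\<And>x x' y. x\<in>carrier (rd_X R) \<Longrightarrow> x'\<in>carrier (rd_X R) \<Longrightarrow> y\<in>carrier (rd_Xc R) \<Longrightarrow>
         rd_pair R (x \<otimes>\<^bsub>rd_X R\<^esub> x') y = rd_pair R x y + rd_pair R x' y"
    "\<And>x y y'. x\<in>carrier (rd_X R) \<Longrightarrow> y\<in>carrier (rd_Xc R) \<Longrightarrow> y'\<in>carrier (rd_Xc R) \<Longrightarrow>
         rd_pair R x (y \<otimes>\<^bsub>rd_Xc R\<^esub> y') = rd_pair R x y + rd_pair R x y'"
    "bij_betw (\<lambda>x. restrict (rd_pair R x) (carrier (rd_Xc R))) (carrier (rd_X R)) (homZ (rd_Xc R))"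
    "bij_betw (\<lambda>y. restrict (\<lambda>x. rd_pair R x y) (carrier (rd_X R))) (carrier (rd_Xc R)) (homZ (rd_X R))"
    "finite (rd_Phi R)" "rd_Phi R \<subseteq> carrier (rd_X R)" "rd_Phic R \<subseteq> carrier (rd_Xc R)"
    "\<exists>c. bij_betw c (rd_Phi R) (rd_Phic R) \<and>
        (\<forall>a\<in>rd_Phi R. rd_pair R a (c a) = 2 \<and>
           refl_X R a (c a) ` rd_Phi R = rd_Phi R \<and>
           refl_Xc R a (c a) ` rd_Phic R = rd_Phic R)"
  using rdD0[OF assms] by simp_all

context fixes R :: "('a,'b) root_datum" assumes RD: "root_datum R"
begin

interpretation X: comm_group "rd_X R" using rdD(1)[OF RD] .
interpretation Xc: comm_group "rd_Xc R" using rdD(2)[OF RD] .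

lemma pair_one_l: "y \<in> carrier (rd_Xc R) \<Longrightarrow> rd_pair R \<one>\<^bsub>rd_X R\<^esub> y = 0"
  using rdD(3)[OF RD, of "\<one>\<^bsub>rd_X R\<^esub>" "\<one>\<^bsub>rd_X R\<^esub>" y] by simp

lemma pair_one_r: "x \<in> carrier (rd_X R) \<Longrightarrow> rd_pair R x \<one>\<^bsub>rd_Xc R\<^esub> = 0"
  using rdD(4)[OF RD, of x "\<one>\<^bsub>rd_Xc R\<^esub>" "\<one>\<^bsub>rd_Xc R\<^esub>"] by simp

lemma pair_inv_l: "x \<in> carrier (rd_X R) \<Longrightarrow> y \<in> carrier (rd_Xc R) \<Longrightarrow>
    rd_pair R (inv\<^bsub>rd_X R\<^esub> x) y = - rd_pair R x y"
  using rdD(3)[OF RD, of x "inv\<^bsub>rd_X R\<^esub> x" y] pair_one_l[of y] by simp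

lemma pair_inv_r: "x \<in> carrier (rd_X R) \<Longrightarrow> y \<in> carrier (rd_Xc R) \<Longrightarrow>
    rd_pair R x (inv\<^bsub>rd_Xc R\<^esub> y) = - rd_pair R x y"
  using rdD(4)[OF RD, of x y "inv\<^bsub>rd_Xc R\<^esub> y"] pair_one_r[of x] by simp

lemma pair_npow_l: "x \<in> carrier (rd_X R) \<Longrightarrow> y \<in> carrier (rd_Xc R) \<Longrightarrow>
    rd_pair R (x [^]\<^bsub>rd_X R\<^esub> (n::nat)) y = int n * rd_pair R x y"
  by (induct n) (simp_all add: pair_one_l rdD(3)[OF RD] algebra_simps)

lemma pair_npow_r: "x \<in> carrier (rd_X R) \<Longrightarrow> y \<in> carrier (rd_Xc R) \<Longrightarrow>
    rd_pair R x (y [^]\<^bsub>rd_Xc R\<^esub> (n::nat)) = int n * rd_pair R x y"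
  by (induct n) (simp_all add: pair_one_r rdD(4)[OF RD] algebra_simps)

lemma pair_ipow_l: assumes x: "x \<in> carrier (rd_X R)" and y: "y \<in> carrier (rd_Xc R)"
  shows "rd_pair R (x [^]\<^bsub>rd_X R\<^esub> (k::int)) y = k * rd_pair R x y"
proof (cases "k < 0")
  case True
  have "x [^]\<^bsub>rd_X R\<^esub> k = inv\<^bsub>rd_X R\<^esub> (x [^]\<^bsub>rd_X R\<^esub> nat (-k))" using True by (simp only: int_pow_def2 if_P)
  also have "rd_pair R \<dots> y = - (int (nat (-k)) * rd_pair R x y)"
    using pair_inv_l[OF X.nat_pow_closed[OF x] y, of "nat (-k)"] pair_npow_l[OF x y, of "nat (-k)"] by linarith
  finally show ?thesis using True by simp
next
  case False
  have "x [^]\<^bsub>rd_X R\<^esub> k = x [^]\<^bsub>rd_X R\<^esub> nat k" using False by (simp only: int_pow_def2 if_not_P if_False)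
  also have "rd_pair R \<dots> y = int (nat k) * rd_pair R x y" using pair_npow_l[OF x y] by blast
  finally show ?thesis using False by simp
qed

lemma pair_ipow_r: assumes x: "x \<in> carrier (rd_X R)" and y: "y \<in> carrier (rd_Xc R)"
  shows "rd_pair R x (y [^]\<^bsub>rd_Xc R\<^esub> (k::int)) = k * rd_pair R x y"
proof (cases "k < 0")
  case True
  have "y [^]\<^bsub>rd_Xc R\<^esub> k = inv\<^bsub>rd_Xc R\<^esub> (y [^]\<^bsub>rd_Xc R\<^esub> nat (-k))" using True by (simp only: int_pow_def2 if_P)
  also have "rd_pair R x \<dots> = - (int (nat (-k)) * rd_pair R x y)"
    using pair_inv_r[OF x Xc.nat_pow_closed[OF y], of "nat (-k)"] pair_npow_r[OF x y, of "nat (-k)"] by linarith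
  finally show ?thesis using True by simp
next
  case False
  have "y [^]\<^bsub>rd_Xc R\<^esub> k = y [^]\<^bsub>rd_Xc R\<^esub> nat k" using False by (simp only: int_pow_def2 if_not_P if_False)
  also have "rd_pair R x \<dots> = int (nat k) * rd_pair R x y" using pair_npow_r[OF x y] by blast
  finally show ?thesis using False by simp
qed

lemma inj_l: "x \<in> carrier (rd_X R) \<Longrightarrow> x' \<in> carrier (rd_X R) \<Longrightarrow>
    (\<And>y. y \<in> carrier (rd_Xc R) \<Longrightarrow> rd_pair R x y = rd_pair R x' y) \<Longrightarrow> x = x'"
  using rdD(5)[OF RD] unfolding bij_betw_def inj_on_def
  by (metis (no_types, lifting) restrict_ext)

lemma inj_r: "y \<in> carrier (rd_Xc R) \<Longrightarrow> y' \<in> carrier (rd_Xc R) \<Longrightarrow>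
    (\<And>x. x \<in> carrier (rd_X R) \<Longrightarrow> rd_pair R x y = rd_pair R x y') \<Longrightarrow> y = y'"
  using rdD(6)[OF RD] unfolding bij_betw_def inj_on_def
  by (metis (no_types, lifting) restrict_ext)

lemma surj_r: "\<phi> \<in> homZ (rd_X R) \<Longrightarrow> \<exists>y\<in>carrier (rd_Xc R). \<forall>x\<in>carrier (rd_X R). \<phi> x = rd_pair R x y"
  using rdD(6)[OF RD] unfolding bij_betw_def by (metis (no_types, lifting) imageE restrict_apply')

lemma zero_l: "x \<in> carrier (rd_X R) \<Longrightarrow> (\<And>y. y \<in> carrier (rd_Xc R) \<Longrightarrow> rd_pair R x y = 0) \<Longrightarrow>
    x = \<one>\<^bsub>rd_X R\<^esub>"
  by (rule inj_l) (simp_all add: pair_one_l)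

lemma zero_r: "y \<in> carrier (rd_Xc R) \<Longrightarrow> (\<And>x. x \<in> carrier (rd_X R) \<Longrightarrow> rd_pair R x y = 0) \<Longrightarrow>
    y = \<one>\<^bsub>rd_Xc R\<^esub>"
  by (rule inj_r) (simp_all add: pair_one_r)

end


locale rdc =
  fixes R :: "('a,'b) root_datum" and c :: "'a \<Rightarrow> 'b"
  assumes RD: "root_datum R"
    and CB: "bij_betw c (rd_Phi R) (rd_Phic R)"
    and C2: "\<forall>a\<in>rd_Phi R. rd_pair R a (c a) = 2 \<and>
           refl_X R a (c a) ` rd_Phi R = rd_Phi R \<and>
           refl_Xc R a (c a) ` rd_Phic R = rd_Phic R"
begin

sublocale X: comm_group "rd_X R" using rdD(1)[OF RD] .
sublocale Xc: comm_group "rd_Xc R" using rdD(2)[OF RD] .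

lemma finPhi: "finite (rd_Phi R)" using rdD(7)[OF RD] .
lemma PhiX: "a \<in> rd_Phi R \<Longrightarrow> a \<in> carrier (rd_X R)" using rdD(8)[OF RD] by blast
lemma cX: "a \<in> rd_Phi R \<Longrightarrow> c a \<in> carrier (rd_Xc R)"
  using rdD(9)[OF RD] CB unfolding bij_betw_def by blast

lemma refl_pair:
  assumes a: "a \<in> rd_Phi R" and g: "g \<in> carrier (rd_X R)" and y: "y \<in> carrier (rd_Xc R)"
  shows "rd_pair R (refl_X R a (c a) g) y = rd_pair R g y - rd_pair R g (c a) * rd_pair R a y"
  unfolding refl_X_def
  using rdD(3)[OF RD g X.int_pow_closed[OF PhiX[OF a]] y] pair_ipow_l[OF RD PhiX[OF a] y] by simp

lemma form_id:
  assumes a: "a \<in> rd_Phi R" and y: "y \<in> carrier (rd_Xc R)"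
  shows "2 * (\<Sum>g\<in>rd_Phi R. rd_pair R g y * rd_pair R g (c a)) =
         rd_pair R a y * (\<Sum>g\<in>rd_Phi R. (rd_pair R g (c a))^2)"
proof -
  let ?s = "refl_X R a (c a)"
  have sP: "?s ` rd_Phi R = rd_Phi R" using C2 a by blast
  have inj: "inj_on ?s (rd_Phi R)" by (rule eq_card_imp_inj_on[OF finPhi]) (simp add: sP)
  define S where "S = (\<Sum>g\<in>rd_Phi R. rd_pair R g y * rd_pair R g (c a))"
  have "S = (\<Sum>g\<in>?s ` rd_Phi R. rd_pair R g y * rd_pair R g (c a))" by (simp add: sP S_def)
  also have "\<dots> = (\<Sum>g\<in>rd_Phi R. rd_pair R (?s g) y * rd_pair R (?s g) (c a))"
    by (simp add: sum.reindex[OF inj])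
  also have "\<dots> = (\<Sum>g\<in>rd_Phi R. rd_pair R a y * (rd_pair R g (c a))^2 - rd_pair R g y * rd_pair R g (c a))"
  proof (rule sum.cong[OF refl])
    fix g assume g: "g \<in> rd_Phi R"
    have 1: "rd_pair R (?s g) y = rd_pair R g y - rd_pair R g (c a) * rd_pair R a y"
      by (rule refl_pair[OF a PhiX[OF g] y])
    have 2: "rd_pair R (?s g) (c a) = rd_pair R g (c a) - rd_pair R g (c a) * 2"
      using refl_pair[OF a PhiX[OF g] cX[OF a]] C2 a by simp
    show "rd_pair R (?s g) y * rd_pair R (?s g) (c a) = rd_pair R a y * (rd_pair R g (c a))^2 - rd_pair R g y * rd_pair R g (c a)"
      unfolding 1 2 by (simp add: algebra_simps power2_eq_square)
  qed
  also have "\<dots> = rd_pair R a y * (\<Sum>g\<in>rd_Phi R. (rd_pair R g (c a))^2) - S"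
    by (simp add: S_def sum_subtractf sum_distrib_left)
  finally show ?thesis unfolding S_def by linarith
qed

definition Q :: "'a \<Rightarrow> rat" where
  "Q a = (\<Sum>g\<in>rd_Phi R. (of_int (rd_pair R g (c a)))^2)"

lemma Q_pos: assumes a: "a \<in> rd_Phi R" shows "Q a > 0"
proof -
  have "(of_int (rd_pair R a (c a)) :: rat)^2 \<le> Q a"
    unfolding Q_def by (rule member_le_sum[OF a _ finPhi]) simp
  moreover have "rd_pair R a (c a) = 2" using C2 a by blast
  ultimately show ?thesis by simp
qed

lemma form_id_rat:
  assumes a: "a \<in> rd_Phi R" and y: "y \<in> carrier (rd_Xc R)"
  shows "(of_int (rd_pair R a y) :: rat) =
     2 / Q a * (\<Sum>g\<in>rd_Phi R. of_int (rd_pair R g y) * of_int (rd_pair R g (c a)))"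
proof -
  have "(of_int (2 * (\<Sum>g\<in>rd_Phi R. rd_pair R g y * rd_pair R g (c a))) :: rat) =
        of_int (rd_pair R a y * (\<Sum>g\<in>rd_Phi R. (rd_pair R g (c a))^2))"
    using form_id[OF a y] by simp
  then have "2 * (\<Sum>g\<in>rd_Phi R. of_int (rd_pair R g y) * of_int (rd_pair R g (c a))) = of_int (rd_pair R a y) * Q a"
    unfolding Q_def by simp
  then show ?thesis using Q_pos[OF a] by (simp add: field_simps)
qed

lemma keyK:
  fixes m :: "'a \<Rightarrow> rat"
  assumes H: "\<forall>b\<in>rd_Phi R. (\<Sum>a\<in>rd_Phi R. m a * of_int (rd_pair R a (c b))) = 0"
    and y: "y \<in> carrier (rd_Xc R)"
  shows "(\<Sum>a\<in>rd_Phi R. m a * of_int (rd_pair R a y)) = 0"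
proof -
  define W where "W g = (\<Sum>a\<in>rd_Phi R. m a * (2 / Q a) * of_int (rd_pair R g (c a)))" for g
  have i: "(\<Sum>a\<in>rd_Phi R. m a * of_int (rd_pair R a z)) = (\<Sum>g\<in>rd_Phi R. of_int (rd_pair R g z) * W g)"
    if z: "z \<in> carrier (rd_Xc R)" for z
  proof -
    have "(\<Sum>a\<in>rd_Phi R. m a * of_int (rd_pair R a z)) =
       (\<Sum>a\<in>rd_Phi R. m a * (2 / Q a * (\<Sum>g\<in>rd_Phi R. of_int (rd_pair R g z) * of_int (rd_pair R g (c a)))))"
      by (rule sum.cong[OF refl]) (simp add: form_id_rat[OF _ z])
    also have "\<dots> = (\<Sum>a\<in>rd_Phi R. \<Sum>g\<in>rd_Phi R. of_int (rd_pair R g z) * (m a * (2 / Q a) * of_int (rd_pair R g (c a))))"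
      by (simp add: sum_distrib_left mult_ac)
    also have "\<dots> = (\<Sum>g\<in>rd_Phi R. \<Sum>a\<in>rd_Phi R. of_int (rd_pair R g z) * (m a * (2 / Q a) * of_int (rd_pair R g (c a))))"
      by (rule sum.swap)
    also have "\<dots> = (\<Sum>g\<in>rd_Phi R. of_int (rd_pair R g z) * W g)"
      by (simp add: W_def sum_distrib_left)
    finally show ?thesis .
  qed
  have "(\<Sum>g\<in>rd_Phi R. (W g)^2) = (\<Sum>g\<in>rd_Phi R. \<Sum>a\<in>rd_Phi R. W g * (m a * (2 / Q a) * of_int (rd_pair R g (c a))))"
    by (simp add: power2_eq_square W_def sum_distrib_left)
  also have "\<dots> = (\<Sum>a\<in>rd_Phi R. \<Sum>g\<in>rd_Phi R. W g * (m a * (2 / Q a) * of_int (rd_pair R g (c a))))"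
    by (rule sum.swap)
  also have "\<dots> = (\<Sum>a\<in>rd_Phi R. m a * (2 / Q a) * (\<Sum>g\<in>rd_Phi R. of_int (rd_pair R g (c a)) * W g))"
    by (simp add: sum_distrib_left mult_ac)
  also have "\<dots> = (\<Sum>a\<in>rd_Phi R. m a * (2 / Q a) * (\<Sum>b\<in>rd_Phi R. m b * of_int (rd_pair R b (c a))))"
    by (rule sum.cong[OF refl]) (simp add: i[OF cX])
  also have "\<dots> = 0" using H by simp
  finally have "(\<Sum>g\<in>rd_Phi R. (W g)^2) = 0" .
  then have "\<forall>g\<in>rd_Phi R. (W g)^2 = 0" using sum_nonneg_eq_0_iff[OF finPhi, of "\<lambda>g. (W g)^2"] by simp
  then have "\<forall>g\<in>rd_Phi R. W g = 0" by simp
  then show ?thesis by (simp add: i[OF y])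
qed


lemma sum_ind: "finite A \<Longrightarrow> h \<in> A \<Longrightarrow> (\<Sum>a\<in>A. (if a = h then k else 0) * f a) = (k::int) * f h"
  by (subst sum.cong[OF refl, of _ _ "\<lambda>a. if a = h then k * f a else 0"]) (auto simp: sum.delta)

lemma PhiX': "rd_Phi R \<subseteq> carrier (rd_X R)" using rdD(8)[OF RD] .
lemma PhicX': "rd_Phic R \<subseteq> carrier (rd_Xc R)" using rdD(9)[OF RD] .

lemma gen_comb:
  assumes "z \<in> generate (rd_X R) (rd_Phi R)"
  shows "\<exists>m::'a\<Rightarrow>int. \<forall>y\<in>carrier (rd_Xc R). rd_pair R z y = (\<Sum>a\<in>rd_Phi R. m a * rd_pair R a y)"
  using assms
proof (induction rule: generate.induct)
  case one
  show ?case by (rule exI[of _ "\<lambda>_. 0"]) (simp add: pair_one_l[OF RD])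
next
  case (incl h)
  show ?case by (rule exI[of _ "\<lambda>a. if a = h then 1 else 0"]) (simp add: sum_ind[OF finPhi incl])
next
  case (inv h)
  show ?case by (rule exI[of _ "\<lambda>a. if a = h then -1 else 0"])
      (simp add: sum_ind[OF finPhi inv] pair_inv_l[OF RD PhiX[OF inv]])
next
  case (eng h1 h2)
  from eng.IH obtain m1 m2 where m1: "\<forall>y\<in>carrier (rd_Xc R). rd_pair R h1 y = (\<Sum>a\<in>rd_Phi R. m1 a * rd_pair R a y)"
    and m2: "\<forall>y\<in>carrier (rd_Xc R). rd_pair R h2 y = (\<Sum>a\<in>rd_Phi R. m2 a * rd_pair R a y)" by blast
  have c1: "h1 \<in> carrier (rd_X R)" by (rule X.generate_in_carrier[OF PhiX' eng.hyps(1)])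
  have c2: "h2 \<in> carrier (rd_X R)" by (rule X.generate_in_carrier[OF PhiX' eng.hyps(2)])
  show ?case
    by (rule exI[of _ "\<lambda>a. m1 a + m2 a"]) (simp add: rdD(3)[OF RD c1 c2] m1 m2 distrib_right sum.distrib)
qed

lemma H1:
  assumes ss: "semisimple R" and x: "x \<in> carrier (rd_X R)"
    and z: "\<forall>a\<in>rd_Phi R. rd_pair R x (c a) = 0"
  shows "x = \<one>\<^bsub>rd_X R\<^esub>"
proof -
  from ss x obtain n :: nat where n: "n > 0" "x [^]\<^bsub>rd_X R\<^esub> n \<in> generate (rd_X R) (rd_Phi R)"
    unfolding semisimple_def top_X_def by blast
  from gen_comb[OF n(2)] obtain m :: "'a \<Rightarrow> int" where
    m: "\<forall>y\<in>carrier (rd_Xc R). rd_pair R (x [^]\<^bsub>rd_X R\<^esub> n) y = (\<Sum>a\<in>rd_Phi R. m a * rd_pair R a y)" by blast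
  have "\<forall>b\<in>rd_Phi R. (\<Sum>a\<in>rd_Phi R. of_int (m a) * of_int (rd_pair R a (c b)) :: rat) = 0"
  proof
    fix b assume b: "b \<in> rd_Phi R"
    have "(\<Sum>a\<in>rd_Phi R. m a * rd_pair R a (c b)) = 0"
      using m cX[OF b] pair_npow_l[OF RD x cX[OF b], of n] z b by simp
    then have "(of_int (\<Sum>a\<in>rd_Phi R. m a * rd_pair R a (c b)) :: rat) = 0" by simp
    then show "(\<Sum>a\<in>rd_Phi R. of_int (m a) * of_int (rd_pair R a (c b)) :: rat) = 0" by simp
  qed
  note K = keyK[OF this]
  show ?thesis
  proof (rule zero_l[OF RD x])
    fix y assume y: "y \<in> carrier (rd_Xc R)"
    have "(\<Sum>a\<in>rd_Phi R. of_int (m a) * of_int (rd_pair R a y) :: rat) = 0" by (rule K[OF y])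
    then have "(of_int (\<Sum>a\<in>rd_Phi R. m a * rd_pair R a y) :: rat) = 0" by simp
    then have "(\<Sum>a\<in>rd_Phi R. m a * rd_pair R a y) = 0" by (simp only: of_int_eq_0_iff)
    then have "int n * rd_pair R x y = 0" using m y pair_npow_l[OF RD x y, of n] by simp
    then show "rd_pair R x y = 0" using n(1) by simp
  qed
qed

lemma common_denom:
  fixes r :: "'x \<Rightarrow> rat"
  assumes "finite A"
  shows "\<exists>N::int. N > 0 \<and> (\<forall>b\<in>A. \<exists>k::int. of_int N * r b = of_int k)"
  using assms
proof (induction A rule: finite_induct)
  case empty
  show ?case by (rule exI[of _ 1]) simp
next
  case (insert b F)
  then obtain N where N: "N > 0" "\<forall>b\<in>F. \<exists>k::int. of_int N * r b = of_int k" by blast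
  obtain p q where pq: "quotient_of (r b) = (p, q)" by (cases "quotient_of (r b)")
  have q: "q > 0" using quotient_of_denom_pos[OF pq] .
  have rb: "r b = of_int p / of_int q" using quotient_of_div[OF pq] .
  show ?case
  proof (rule exI[of _ "N * q"], intro conjI ballI)
    show "N * q > 0" using N(1) q by simp
  next
    fix b' assume b': "b' \<in> insert b F"
    show "\<exists>k::int. of_int (N * q) * r b' = of_int k"
    proof (cases "b' = b")
      case True
      show ?thesis by (rule exI[of _ "N * p"]) (use q in \<open>simp add: True rb\<close>)
    next
      case False
      with b' N obtain k where "of_int N * r b' = of_int k" by auto
      then show ?thesis by (intro exI[of _ "k * q"]) (simp add: algebra_simps)
    qed
  qed
qed

lemma build_z:
  fixes kk :: "'a \<Rightarrow> int"
  assumes "finite F" "F \<subseteq> rd_Phi R"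
  shows "\<exists>z\<in>generate (rd_Xc R) (rd_Phic R). \<forall>x\<in>carrier (rd_X R). rd_pair R x z = (\<Sum>b\<in>F. kk b * rd_pair R x (c b))"
  using assms
proof (induction F rule: finite_induct)
  case empty
  show ?case by (rule bexI[of _ "\<one>\<^bsub>rd_Xc R\<^esub>"]) (simp_all add: pair_one_r[OF RD] generate.one)
next
  case (insert b F)
  then obtain z where z: "z \<in> generate (rd_Xc R) (rd_Phic R)"
    "\<forall>x\<in>carrier (rd_X R). rd_pair R x z = (\<Sum>b\<in>F. kk b * rd_pair R x (c b))" by auto
  have b: "b \<in> rd_Phi R" using insert by auto
  have cb: "c b \<in> rd_Phic R" using CB b unfolding bij_betw_def by blast
  have p: "c b [^]\<^bsub>rd_Xc R\<^esub> kk b \<in> generate (rd_Xc R) (rd_Phic R)"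
    by (rule Xc.subgroup_int_pow_closed[OF Xc.generate_is_subgroup[OF PhicX'] generate.incl[OF cb]])
  have zc: "z \<in> carrier (rd_Xc R)" by (rule Xc.generate_in_carrier[OF PhicX' z(1)])
  show ?case
  proof (rule bexI[of _ "z \<otimes>\<^bsub>rd_Xc R\<^esub> c b [^]\<^bsub>rd_Xc R\<^esub> kk b"])
    show "z \<otimes>\<^bsub>rd_Xc R\<^esub> c b [^]\<^bsub>rd_Xc R\<^esub> kk b \<in> generate (rd_Xc R) (rd_Phic R)"
      by (rule generate.eng[OF z(1) p])
    show "\<forall>x\<in>carrier (rd_X R). rd_pair R x (z \<otimes>\<^bsub>rd_Xc R\<^esub> c b [^]\<^bsub>rd_Xc R\<^esub> kk b) = (\<Sum>b\<in>insert b F. kk b * rd_pair R x (c b))"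
      using insert(1,2) z(2) by (simp add: rdD(4)[OF RD _ zc Xc.int_pow_closed[OF cX[OF b]]] pair_ipow_r[OF RD _ cX[OF b]])
  qed
qed

lemma H2:
  assumes ss: "semisimple R" and y: "y \<in> carrier (rd_Xc R)"
  shows "\<exists>n::nat. n > 0 \<and> y [^]\<^bsub>rd_Xc R\<^esub> n \<in> generate (rd_Xc R) (rd_Phic R)"
proof -
  have "\<exists>r. \<forall>g\<in>rd_Phi R. (\<Sum>b\<in>rd_Phi R. r b * (of_int (rd_pair R g (c b)) :: rat)) = of_int (rd_pair R g y)"
  proof (rule fredholm[OF finPhi finPhi])
    fix m :: "'a \<Rightarrow> rat"
    assume "\<forall>j\<in>rd_Phi R. (\<Sum>i\<in>rd_Phi R. m i * of_int (rd_pair R i (c j))) = 0"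
    then show "(\<Sum>i\<in>rd_Phi R. m i * of_int (rd_pair R i y)) = 0" by (rule keyK[OF _ y])
  qed
  then obtain r where r: "\<forall>g\<in>rd_Phi R. (\<Sum>b\<in>rd_Phi R. r b * (of_int (rd_pair R g (c b)) :: rat)) = of_int (rd_pair R g y)" by blast
  obtain N :: int where N: "N > 0" "\<forall>b\<in>rd_Phi R. \<exists>k::int. of_int N * r b = of_int k"
    using common_denom[OF finPhi, of r] by blast
  define kk where "kk b = (SOME k::int. of_int N * r b = of_int k)" for b
  have kk: "of_int N * r b = of_int (kk b)" if "b \<in> rd_Phi R" for b
  proof -
    from N(2) that obtain k :: int where "of_int N * r b = of_int k" by blast
    then show ?thesis unfolding kk_def by (rule someI)
  qed
  obtain z where z: "z \<in> generate (rd_Xc R) (rd_Phic R)"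
    "\<forall>x\<in>carrier (rd_X R). rd_pair R x z = (\<Sum>b\<in>rd_Phi R. kk b * rd_pair R x (c b))"
    using build_z[OF finPhi subset_refl, of kk] by blast
  have zc: "z \<in> carrier (rd_Xc R)" by (rule Xc.generate_in_carrier[OF PhicX' z(1)])
  let ?yN = "y [^]\<^bsub>rd_Xc R\<^esub> nat N"
  have yN: "?yN \<in> carrier (rd_Xc R)" using y by simp
  have onroots: "rd_pair R g z = rd_pair R g ?yN" if g: "g \<in> rd_Phi R" for g
  proof -
    have "(of_int (rd_pair R g z) :: rat) = (\<Sum>b\<in>rd_Phi R. of_int (kk b) * of_int (rd_pair R g (c b)))"
      using z(2) PhiX[OF g] by simp
    also have "\<dots> = (\<Sum>b\<in>rd_Phi R. of_int N * (r b * of_int (rd_pair R g (c b))))"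
      by (rule sum.cong[OF refl]) (simp add: kk[symmetric])
    also have "\<dots> = of_int N * of_int (rd_pair R g y)"
      using r g by (simp add: sum_distrib_left[symmetric])
    finally have "rd_pair R g z = N * rd_pair R g y"
      by (metis of_int_eq_iff of_int_mult)
    then show ?thesis using pair_npow_r[OF RD PhiX[OF g] y, of "nat N"] N(1) by simp
  qed
  have "z = ?yN"
  proof (rule inj_r[OF RD zc yN])
    fix x assume x: "x \<in> carrier (rd_X R)"
    from ss x obtain n :: nat where n: "n > 0" "x [^]\<^bsub>rd_X R\<^esub> n \<in> generate (rd_X R) (rd_Phi R)"
      unfolding semisimple_def top_X_def by blast
    from gen_comb[OF n(2)] obtain m :: "'a \<Rightarrow> int" where
      m: "\<forall>y\<in>carrier (rd_Xc R). rd_pair R (x [^]\<^bsub>rd_X R\<^esub> n) y = (\<Sum>a\<in>rd_Phi R. m a * rd_pair R a y)" by blast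
    have "int n * rd_pair R x z = int n * rd_pair R x ?yN"
      using m zc yN pair_npow_l[OF RD x zc, of n] pair_npow_l[OF RD x yN, of n] onroots
      by (simp cong: sum.cong)
    then show "rd_pair R x z = rd_pair R x ?yN" using n(1) by simp
  qed
  then show ?thesis using z(1) N(1) by (intro exI[of _ "nat N"]) simp
qed

end


lemma homZ_group_carrier[simp]: "carrier (homZ_group G) = homZ G"
  by (simp add: homZ_group_def)
lemma homZ_group_mult[simp]: "f \<otimes>\<^bsub>homZ_group G\<^esub> g = restrict (\<lambda>x. f x + g x) (carrier G)"
  by (simp add: homZ_group_def)
lemma homZ_group_one[simp]: "\<one>\<^bsub>homZ_group G\<^esub> = restrict (\<lambda>x. 0) (carrier G)"
  by (simp add: homZ_group_def)

lemma homZD: "f \<in> homZ G \<Longrightarrow> x \<in> carrier G \<Longrightarrow> y \<in> carrier G \<Longrightarrow> f (x \<otimes>\<^bsub>G\<^esub> y) = f x + f y"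
  by (simp add: homZ_def)
lemma homZ_ext: "f \<in> homZ G \<Longrightarrow> f \<in> extensional (carrier G)"
  by (simp add: homZ_def)

lemma homZ_eqI: "f \<in> homZ G \<Longrightarrow> g \<in> homZ G \<Longrightarrow> (\<And>x. x \<in> carrier G \<Longrightarrow> f x = g x) \<Longrightarrow> f = g"
  by (meson extensionalityI homZ_ext)

lemma homZ_group_cg:
  assumes "group G" shows "comm_group (homZ_group G)"
proof -
  interpret G: group G by fact
  show ?thesis
  proof (rule comm_groupI)
    fix f g assume "f \<in> carrier (homZ_group G)" "g \<in> carrier (homZ_group G)"
    then show "f \<otimes>\<^bsub>homZ_group G\<^esub> g \<in> carrier (homZ_group G)"
      by (auto simp: homZ_def)
  next
    show "\<one>\<^bsub>homZ_group G\<^esub> \<in> carrier (homZ_group G)" by (auto simp: homZ_def)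
  next
    fix f g h assume "f \<in> carrier (homZ_group G)" "g \<in> carrier (homZ_group G)" "h \<in> carrier (homZ_group G)"
    then show "f \<otimes>\<^bsub>homZ_group G\<^esub> g \<otimes>\<^bsub>homZ_group G\<^esub> h = f \<otimes>\<^bsub>homZ_group G\<^esub> (g \<otimes>\<^bsub>homZ_group G\<^esub> h)"
      by (auto simp: fun_eq_iff)
  next
    fix f g assume "f \<in> carrier (homZ_group G)" "g \<in> carrier (homZ_group G)"
    then show "f \<otimes>\<^bsub>homZ_group G\<^esub> g = g \<otimes>\<^bsub>homZ_group G\<^esub> f"
      by (auto simp: fun_eq_iff)
  next
    fix f assume f: "f \<in> carrier (homZ_group G)"
    show "\<one>\<^bsub>homZ_group G\<^esub> \<otimes>\<^bsub>homZ_group G\<^esub> f = f"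
      unfolding homZ_group_mult homZ_group_one
    proof (rule extensionalityI[of _ "carrier G"])
      show "f \<in> extensional (carrier G)" using f by (simp add: homZ_def)
    qed simp_all
  next
    fix f assume f: "f \<in> carrier (homZ_group G)"
    show "\<exists>g\<in>carrier (homZ_group G). g \<otimes>\<^bsub>homZ_group G\<^esub> f = \<one>\<^bsub>homZ_group G\<^esub>"
      by (rule bexI[of _ "restrict (\<lambda>x. - f x) (carrier G)"]) (use f in \<open>auto simp: homZ_def fun_eq_iff\<close>)
  qed
qed

lemma homZ_inv:
  assumes G: "group G" and f: "f \<in> homZ G"
  shows "inv\<^bsub>homZ_group G\<^esub> f = restrict (\<lambda>x. - f x) (carrier G)"
proof -
  interpret H: comm_group "homZ_group G" by (rule homZ_group_cg[OF G])
  interpret G: group G by fact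
  have m: "restrict (\<lambda>x. - f x) (carrier G) \<in> carrier (homZ_group G)"
    using f by (auto simp: homZ_def)
  show ?thesis
    by (rule H.inv_equality) (use f m in \<open>auto simp: fun_eq_iff\<close>)
qed

lemma homZ_pow:
  assumes G: "group G" and f: "f \<in> homZ G" and x: "x \<in> carrier G"
  shows "(f [^]\<^bsub>homZ_group G\<^esub> (n::nat)) x = int n * f x"
  by (induct n) (simp_all add: x algebra_simps)

lemma homZ_one:
  assumes G: "group G" and f: "f \<in> homZ G" shows "f \<one>\<^bsub>G\<^esub> = 0"
proof -
  interpret G: group G by fact
  show ?thesis using homZD[OF f G.one_closed G.one_closed] by simp
qed

lemma homZ_invG:
  assumes G: "group G" and f: "f \<in> homZ G" and x: "x \<in> carrier G" shows "f (inv\<^bsub>G\<^esub> x) = - f x"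
proof -
  interpret G: group G by fact
  show ?thesis using homZD[OF f G.inv_closed[OF x] x] homZ_one[OF G f] by (simp add: x)
qed

lemma homZ_npowG:
  assumes G: "group G" and f: "f \<in> homZ G" and x: "x \<in> carrier G" shows "f (x [^]\<^bsub>G\<^esub> (n::nat)) = int n * f x"
proof -
  interpret G: group G by fact
  show ?thesis by (induct n) (simp_all add: homZ_one[OF G f] homZD[OF f] x algebra_simps)
qed

lemma factor_homZ:
  assumes p: "group_hom G H p" and ps: "p ` carrier G = carrier H" and f: "f \<in> homZ G"
    and k: "\<forall>x\<in>kernel G H p. f x = 0"
  shows "\<exists>\<phi>\<in>homZ H. \<forall>g\<in>carrier G. f g = \<phi> (p g)"
proof -
  interpret p: group_hom G H p by fact
  have wd: "f g = f g'" if g: "g \<in> carrier G" and g': "g' \<in> carrier G" and e: "p g = p g'" for g g'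
  proof -
    have "g \<otimes>\<^bsub>G\<^esub> inv\<^bsub>G\<^esub> g' \<in> kernel G H p"
      using g g' e by (simp add: kernel_def p.hom_mult p.hom_inv)
    then have "f (g \<otimes>\<^bsub>G\<^esub> inv\<^bsub>G\<^esub> g') = 0" using k by blast
    moreover have "g = (g \<otimes>\<^bsub>G\<^esub> inv\<^bsub>G\<^esub> g') \<otimes>\<^bsub>G\<^esub> g'" using g g' by (simp add: p.G.m_assoc)
    ultimately show ?thesis using homZD[OF f _ g'] g g' by (metis add_0 p.G.inv_closed p.G.m_closed)
  qed
  define sel where "sel h = (SOME g. g \<in> carrier G \<and> p g = h)" for h
  have sel: "sel h \<in> carrier G \<and> p (sel h) = h" if "h \<in> carrier H" for h
  proof -
    have "h \<in> p ` carrier G" using that ps by simp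
    then obtain g where "g \<in> carrier G" "p g = h" by (rule imageE) simp
    then have "g \<in> carrier G \<and> p g = h" by simp
    then show ?thesis unfolding sel_def by (rule someI)
  qed
  define \<phi> where "\<phi> = restrict (\<lambda>h. f (sel h)) (carrier H)"
  have eq: "f g = \<phi> (p g)" if g: "g \<in> carrier G" for g
  proof -
    have pg: "p g \<in> carrier H" using g by simp
    have "\<phi> (p g) = f (sel (p g))" using pg by (simp add: \<phi>_def)
    also have "\<dots> = f g" using sel[OF pg] g by (intro wd) auto
    finally show ?thesis by simp
  qed
  have "\<phi> \<in> homZ H"
    unfolding homZ_def
  proof (intro CollectI conjI ballI)
    show "\<phi> \<in> extensional (carrier H)" by (simp add: \<phi>_def)
  next
    fix x y assume x: "x \<in> carrier H" and y: "y \<in> carrier H"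
    obtain gx gy where gx: "gx \<in> carrier G" "p gx = x" and gy: "gy \<in> carrier G" "p gy = y"
      using sel[OF x] sel[OF y] by blast
    have "\<phi> (x \<otimes>\<^bsub>H\<^esub> y) = \<phi> (p (gx \<otimes>\<^bsub>G\<^esub> gy))" using gx gy by simp
    also have "\<dots> = f (gx \<otimes>\<^bsub>G\<^esub> gy)" using eq gx gy by simp
    also have "\<dots> = f gx + f gy" by (rule homZD[OF f gx(1) gy(1)])
    finally show "\<phi> (x \<otimes>\<^bsub>H\<^esub> y) = \<phi> x + \<phi> y" using eq gx gy by simp
  qed
  then show ?thesis using eq by blast
qed



locale mt =
  fixes R :: "('a, 'b) root_datum" and T :: "('c, 'd) root_datum" and A :: "'e monoid"
    and h1 :: "'a \<Rightarrow> 'e" and h2 :: "'c \<Rightarrow> 'e"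
  assumes RD: "root_datum R" and SS: "semisimple R"
    and TD: "root_datum T" and TT: "rd_torus T"
    and AG: "comm_group A"
    and h1: "h1 \<in> hom (rd_X R) A" and h1s: "h1 ` carrier (rd_X R) = carrier A"
    and h2: "h2 \<in> hom (rd_X T) A" and h2s: "h2 ` carrier (rd_X T) = carrier A"
    and Phik: "rd_Phi R \<subseteq> kernel (rd_X R) A h1"
begin

sublocale X: comm_group "rd_X R" using rdD(1)[OF RD] .
sublocale Xc: comm_group "rd_Xc R" using rdD(2)[OF RD] .
sublocale Y: comm_group "rd_X T" using rdD(1)[OF TD] .
sublocale Yc: comm_group "rd_Xc T" using rdD(2)[OF TD] .
sublocale A: comm_group A using AG .
sublocale H1: group_hom "rd_X R" A h1
  by (simp add: group_hom_def group_hom_axioms_def h1 X.group_axioms A.group_axioms)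
sublocale H2: group_hom "rd_X T" A h2
  by (simp add: group_hom_def group_hom_axioms_def h2 Y.group_axioms A.group_axioms)

abbreviation "G \<equiv> rd_X R \<times>\<times> rd_X T"

definition BB where
  "BB = {(x1, x2). x1 \<in> carrier (rd_X R) \<and> x2 \<in> carrier (rd_X T) \<and> h1 x1 = h2 x2}"

definition XB where "XB = G\<lparr>carrier := BB\<rparr>"

definition gd where "gd y = restrict (\<lambda>b. rd_pair R (fst b) y) BB"
definition gs where "gs y = restrict (\<lambda>b. rd_pair T (snd b) y) BB"

abbreviation "R' \<equiv> central_prod R T h1 h2"

lemma G_group: "group G" by (rule DirProd_group[OF X.group_axioms Y.group_axioms])

lemma BB_sub: "subgroup BB G"
proof (rule group.subgroupI[OF G_group])
  show "BB \<subseteq> carrier G" by (auto simp: BB_def)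
  have "(\<one>\<^bsub>rd_X R\<^esub>, \<one>\<^bsub>rd_X T\<^esub>) \<in> BB" by (simp add: BB_def)
  then show "BB \<noteq> {}" by blast
next
  fix a assume a: "a \<in> BB"
  then obtain x t where xt: "a = (x, t)" "x \<in> carrier (rd_X R)" "t \<in> carrier (rd_X T)" "h1 x = h2 t"
    by (auto simp: BB_def)
  have "inv\<^bsub>G\<^esub> a = (inv\<^bsub>rd_X R\<^esub> x, inv\<^bsub>rd_X T\<^esub> t)"
    using xt by (simp add: inv_DirProd[OF X.group_axioms Y.group_axioms])
  then show "inv\<^bsub>G\<^esub> a \<in> BB" using xt by (simp add: BB_def H1.hom_inv H2.hom_inv)
next
  fix a b assume "a \<in> BB" "b \<in> BB"
  then show "a \<otimes>\<^bsub>G\<^esub> b \<in> BB" by (auto simp: BB_def H1.hom_mult H2.hom_mult)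
qed

lemma XB_group: "group XB"
  unfolding XB_def by (rule subgroup.subgroup_is_group[OF BB_sub G_group])

lemma XB_carrier[simp]: "carrier XB = BB" by (simp add: XB_def)
lemma XB_mult[simp]: "a \<otimes>\<^bsub>XB\<^esub> b = a \<otimes>\<^bsub>G\<^esub> b" by (simp add: XB_def)
lemma XB_one[simp]: "\<one>\<^bsub>XB\<^esub> = (\<one>\<^bsub>rd_X R\<^esub>, \<one>\<^bsub>rd_X T\<^esub>)" by (simp add: XB_def)

lemma XB_inv: "(x, t) \<in> BB \<Longrightarrow> inv\<^bsub>XB\<^esub> (x, t) = (inv\<^bsub>rd_X R\<^esub> x, inv\<^bsub>rd_X T\<^esub> t)"
  unfolding XB_def
  using group.m_inv_consistent[OF G_group BB_sub] inv_DirProd[OF X.group_axioms Y.group_axioms]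
  by (auto simp: BB_def)

lemma XB_npow: "(x, t) [^]\<^bsub>XB\<^esub> (n::nat) = (x [^]\<^bsub>rd_X R\<^esub> n, t [^]\<^bsub>rd_X T\<^esub> n)"
  unfolding XB_def by (induct n) simp_all

lemma BB_mem: "(x, t) \<in> BB \<longleftrightarrow> x \<in> carrier (rd_X R) \<and> t \<in> carrier (rd_X T) \<and> h1 x = h2 t"
  by (simp add: BB_def)

lemma BB_fst: "b \<in> BB \<Longrightarrow> fst b \<in> carrier (rd_X R)" by (auto simp: BB_def)
lemma BB_snd: "b \<in> BB \<Longrightarrow> snd b \<in> carrier (rd_X T)" by (auto simp: BB_def)
lemma BB_h: "b \<in> BB \<Longrightarrow> h1 (fst b) = h2 (snd b)" by (auto simp: BB_def)

lemma Phi_h1: "a \<in> rd_Phi R \<Longrightarrow> a \<in> carrier (rd_X R) \<and> h1 a = \<one>\<^bsub>A\<^esub>"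
  using Phik by (auto simp: kernel_def)

lemma TPhi: "rd_Phi T = {}" "rd_Phic T = {}" using TT by (auto simp: rd_torus_def)

lemma R'_X: "rd_X R' = XB"
  by (simp add: central_prod_def rd_induced_def rd_sum_def XB_def BB_def)
lemma R'_Phi: "rd_Phi R' = (\<lambda>a. (a, \<one>\<^bsub>rd_X T\<^esub>)) ` rd_Phi R"
  by (simp add: central_prod_def rd_induced_def rd_sum_def TPhi)
lemma R'_Xc: "rd_Xc R' = homZ_group XB"
  by (simp add: central_prod_def rd_induced_def rd_sum_def XB_def BB_def)
lemma R'_pair: "rd_pair R' = (\<lambda>x f. f x)"
  by (simp add: central_prod_def rd_induced_def)

lemma R'_Phic: "rd_Phic R' = gd ` rd_Phic R"
proof -
  have "rd_Phic R' = (\<lambda>y. restrict (\<lambda>x. case x of (x1, x2) \<Rightarrow> rd_pair R x1 y + rd_pair T x2 \<one>\<^bsub>rd_Xc T\<^esub>) BB) ` rd_Phic R"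
    by (simp add: central_prod_def rd_induced_def rd_sum_def TPhi BB_def image_image case_prod_beta)
  also have "\<dots> = gd ` rd_Phic R"
  proof (rule image_cong[OF refl])
    fix y assume "y \<in> rd_Phic R"
    show "restrict (\<lambda>x. case x of (x1, x2) \<Rightarrow> rd_pair R x1 y + rd_pair T x2 \<one>\<^bsub>rd_Xc T\<^esub>) BB = gd y"
      unfolding gd_def
      by (rule restrict_ext) (auto simp: BB_def pair_one_r[OF TD])
  qed
  finally show ?thesis .
qed

lemma fst_hom: "group_hom XB (rd_X R) fst"
  unfolding group_hom_def group_hom_axioms_def
  by (auto simp: XB_group X.group_axioms hom_def BB_def mult_DirProd')
lemma snd_hom: "group_hom XB (rd_X T) snd"
  unfolding group_hom_def group_hom_axioms_def
  by (auto simp: XB_group Y.group_axioms hom_def BB_def mult_DirProd')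

lemma fst_surj: "fst ` BB = carrier (rd_X R)"
proof
  show "fst ` BB \<subseteq> carrier (rd_X R)" by (auto simp: BB_def)
next
  show "carrier (rd_X R) \<subseteq> fst ` BB"
  proof
    fix x assume x: "x \<in> carrier (rd_X R)"
    then have "h1 x \<in> h2 ` carrier (rd_X T)" using h2s by simp
    then obtain t where "h1 x = h2 t" "t \<in> carrier (rd_X T)" by (rule imageE)
    then have "(x, t) \<in> BB" using x by (simp add: BB_def)
    then show "x \<in> fst ` BB" by (rule image_eqI[rotated]) simp
  qed
qed

lemma snd_surj: "snd ` BB = carrier (rd_X T)"
proof
  show "snd ` BB \<subseteq> carrier (rd_X T)" by (auto simp: BB_def)
next
  show "carrier (rd_X T) \<subseteq> snd ` BB"
  proof
    fix t assume t: "t \<in> carrier (rd_X T)"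
    then have "h2 t \<in> h1 ` carrier (rd_X R)" using h1s by simp
    then obtain x where "h2 t = h1 x" "x \<in> carrier (rd_X R)" by (rule imageE)
    then have "(x, t) \<in> BB" using t by (simp add: BB_def)
    then show "t \<in> snd ` BB" by (rule image_eqI[rotated]) simp
  qed
qed

lemma K1: "kernel XB (rd_X R) fst = {b \<in> BB. fst b = \<one>\<^bsub>rd_X R\<^esub>}"
  by (simp add: kernel_def)
lemma K2: "kernel XB (rd_X T) snd = {b \<in> BB. snd b = \<one>\<^bsub>rd_X T\<^esub>}"
  by (simp add: kernel_def)

end


context mt begin

definition cc where "cc = (SOME c. rdc R c)"

lemma rdc_cc: "rdc R cc"
proof -
  obtain c where "bij_betw c (rd_Phi R) (rd_Phic R) \<and>
        (\<forall>a\<in>rd_Phi R. rd_pair R a (c a) = 2 \<and>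
           refl_X R a (c a) ` rd_Phi R = rd_Phi R \<and>
           refl_Xc R a (c a) ` rd_Phic R = rd_Phic R)" using rdD(10)[OF RD] by blast
  then have "rdc R c" unfolding rdc_def using RD by blast
  then show ?thesis unfolding cc_def by (rule someI[of "rdc R"])
qed

lemma perp_eq: "perp_Xc R' (rd_Phic R') = kernel XB (rd_X R) fst"
proof -
  interpret RC: rdc R cc by (rule rdc_cc)
  have "b \<in> perp_Xc R' (rd_Phic R') \<longleftrightarrow> b \<in> kernel XB (rd_X R) fst" for b
  proof (cases "b \<in> BB")
    case False
    then show ?thesis by (simp add: perp_Xc_def R'_X kernel_def)
  next
    case True
    have fb: "fst b \<in> carrier (rd_X R)" using BB_fst[OF True] .
    have "b \<in> perp_Xc R' (rd_Phic R') \<longleftrightarrow> (\<forall>y\<in>rd_Phic R. rd_pair R (fst b) y = 0)"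
      using True by (simp add: perp_Xc_def R'_X R'_Phic R'_pair gd_def)
    also have "\<dots> \<longleftrightarrow> fst b = \<one>\<^bsub>rd_X R\<^esub>"
    proof
      assume H: "\<forall>y\<in>rd_Phic R. rd_pair R (fst b) y = 0"
      show "fst b = \<one>\<^bsub>rd_X R\<^esub>"
      proof (rule RC.H1[OF SS fb])
        show "\<forall>a\<in>rd_Phi R. rd_pair R (fst b) (cc a) = 0"
          using H RC.CB unfolding bij_betw_def by blast
      qed
    next
      assume "fst b = \<one>\<^bsub>rd_X R\<^esub>"
      then show "\<forall>y\<in>rd_Phic R. rd_pair R (fst b) y = 0"
        using pair_one_l[OF RD] rdD(9)[OF RD] by auto
    qed
    finally show ?thesis using True by (simp add: kernel_def)
  qed
  then show ?thesis by blast
qed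

lemma genA: "z \<in> generate (rd_X R) (rd_Phi R) \<Longrightarrow>
   (z, \<one>\<^bsub>rd_X T\<^esub>) \<in> generate XB ((\<lambda>a. (a, \<one>\<^bsub>rd_X T\<^esub>)) ` rd_Phi R)"
proof (induction rule: generate.induct)
  case one
  show ?case using generate.one[of XB] by simp
next
  case (incl h)
  then show ?case by (intro generate.incl) simp
next
  case (inv h)
  have hB: "(h, \<one>\<^bsub>rd_X T\<^esub>) \<in> BB" using Phi_h1[OF inv] by (simp add: BB_def)
  have "inv\<^bsub>XB\<^esub> (h, \<one>\<^bsub>rd_X T\<^esub>) = (inv\<^bsub>rd_X R\<^esub> h, \<one>\<^bsub>rd_X T\<^esub>)" by (simp add: XB_inv[OF hB])
  moreover have "inv\<^bsub>XB\<^esub> (h, \<one>\<^bsub>rd_X T\<^esub>) \<in> generate XB ((\<lambda>a. (a, \<one>\<^bsub>rd_X T\<^esub>)) ` rd_Phi R)"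
    by (rule generate.inv) (simp add: inv)
  ultimately show ?case by simp
next
  case (eng h1 h2)
  have "(h1, \<one>\<^bsub>rd_X T\<^esub>) \<otimes>\<^bsub>XB\<^esub> (h2, \<one>\<^bsub>rd_X T\<^esub>) \<in> generate XB ((\<lambda>a. (a, \<one>\<^bsub>rd_X T\<^esub>)) ` rd_Phi R)"
    by (rule generate.eng[OF eng.IH])
  then show ?case by simp
qed

lemma genB: "z \<in> generate XB ((\<lambda>a. (a, \<one>\<^bsub>rd_X T\<^esub>)) ` rd_Phi R) \<Longrightarrow> snd z = \<one>\<^bsub>rd_X T\<^esub>"
proof (induction rule: generate.induct)
  case one
  show ?case by simp
next
  case (incl h)
  then show ?case by auto
next
  case (inv h)
  then obtain a where a: "a \<in> rd_Phi R" "h = (a, \<one>\<^bsub>rd_X T\<^esub>)" by blast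
  have hB: "(a, \<one>\<^bsub>rd_X T\<^esub>) \<in> BB" using Phi_h1[OF a(1)] by (simp add: BB_def)
  show ?case using XB_inv[OF hB] a(2) by simp
next
  case (eng h1 h2)
  then show ?case by (simp add: mult_DirProd')
qed

lemma top_eq: "top_X R' (rd_Phi R') = kernel XB (rd_X T) snd"
proof -
  have "b \<in> top_X R' (rd_Phi R') \<longleftrightarrow> b \<in> kernel XB (rd_X T) snd" for b
  proof (cases "b \<in> BB")
    case False
    then show ?thesis by (simp add: top_X_def R'_X kernel_def)
  next
    case True
    obtain x t where b: "b = (x, t)" by (cases b)
    have x: "x \<in> carrier (rd_X R)" and t: "t \<in> carrier (rd_X T)" and h: "h1 x = h2 t"
      using True b by (auto simp: BB_def)
    have "b \<in> top_X R' (rd_Phi R') \<longleftrightarrow>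
        (\<exists>n::nat. n > 0 \<and> (x [^]\<^bsub>rd_X R\<^esub> n, t [^]\<^bsub>rd_X T\<^esub> n) \<in> generate XB ((\<lambda>a. (a, \<one>\<^bsub>rd_X T\<^esub>)) ` rd_Phi R))"
      using True by (simp add: top_X_def R'_X R'_Phi b XB_npow)
    also have "\<dots> \<longleftrightarrow> t = \<one>\<^bsub>rd_X T\<^esub>"
    proof
      assume "\<exists>n::nat. n > 0 \<and> (x [^]\<^bsub>rd_X R\<^esub> n, t [^]\<^bsub>rd_X T\<^esub> n) \<in> generate XB ((\<lambda>a. (a, \<one>\<^bsub>rd_X T\<^esub>)) ` rd_Phi R)"
      then obtain n :: nat where n: "n > 0" "(x [^]\<^bsub>rd_X R\<^esub> n, t [^]\<^bsub>rd_X T\<^esub> n) \<in> generate XB ((\<lambda>a. (a, \<one>\<^bsub>rd_X T\<^esub>)) ` rd_Phi R)"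
        by blast
      have tn: "t [^]\<^bsub>rd_X T\<^esub> n = \<one>\<^bsub>rd_X T\<^esub>" using genB[OF n(2)] by simp
      show "t = \<one>\<^bsub>rd_X T\<^esub>"
      proof (rule zero_l[OF TD t])
        fix y assume y: "y \<in> carrier (rd_Xc T)"
        have "int n * rd_pair T t y = 0"
          using pair_npow_l[OF TD t y, of n] tn pair_one_l[OF TD y] by simp
        then show "rd_pair T t y = 0" using n(1) by simp
      qed
    next
      assume t1: "t = \<one>\<^bsub>rd_X T\<^esub>"
      from SS x obtain n :: nat where n: "n > 0" "x [^]\<^bsub>rd_X R\<^esub> n \<in> generate (rd_X R) (rd_Phi R)"
        unfolding semisimple_def top_X_def by blast
      show "\<exists>n::nat. n > 0 \<and> (x [^]\<^bsub>rd_X R\<^esub> n, t [^]\<^bsub>rd_X T\<^esub> n) \<in> generate XB ((\<lambda>a. (a, \<one>\<^bsub>rd_X T\<^esub>)) ` rd_Phi R)"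
        using n genA[OF n(2)] t1 by auto
    qed
    finally show ?thesis using True b by (simp add: kernel_def)
  qed
  then show ?thesis by blast
qed

end


context mt begin

lemma coset_props:
  assumes p: "group_hom XB H p" and C: "C \<in> carrier (XB Mod kernel XB H p)"
  shows "\<exists>b\<in>BB. induced_map p C = p b \<and> (SOME x. x \<in> C) \<in> BB \<and> p (SOME x. x \<in> C) = p b"
proof -
  interpret p: group_hom XB H p by fact
  from C obtain b where b: "b \<in> BB" "C = kernel XB H p #>\<^bsub>XB\<^esub> b"
    unfolding FactGroup_def RCOSETS_def by auto
  have mem: "x \<in> BB \<and> p x = p b" if x: "x \<in> C" for x
  proof -
    from x b obtain k where k: "k \<in> kernel XB H p" "x = k \<otimes>\<^bsub>XB\<^esub> b" unfolding r_coset_def by blast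
    have kB: "k \<in> BB" using k(1) by (simp add: kernel_def)
    have "x \<in> BB" using k kB b(1) p.G.m_closed by simp
    moreover have "p x = p b" using k kB b(1) p.hom_mult by (simp add: kernel_def)
    ultimately show ?thesis by simp
  qed
  have bC: "b \<in> C"
  proof -
    have "\<one>\<^bsub>XB\<^esub> \<otimes>\<^bsub>XB\<^esub> b \<in> C" unfolding b(2) r_coset_def
    proof -
      have "\<one>\<^bsub>XB\<^esub> \<in> kernel XB H p" unfolding kernel_def using p.G.one_closed p.hom_one by blast
      then show "\<one>\<^bsub>XB\<^esub> \<otimes>\<^bsub>XB\<^esub> b \<in> (\<Union>h\<in>kernel XB H p. {h \<otimes>\<^bsub>XB\<^esub> b})" by blast
    qed
    then show ?thesis using b(1) p.G.l_one[of b] by simp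
  qed
  have img: "p ` C = {p b}" using mem bC by blast
  have "induced_map p C = p b" unfolding induced_map_def img by simp
  moreover have "(SOME x. x \<in> C) \<in> C" using bC by (rule someI)
  ultimately show ?thesis using mem b(1) by blast
qed

lemma im_fst: "induced_map fst = (\<lambda>S. the_elem (fst ` S))" by (rule ext) (simp add: induced_map_def)
lemma im_snd: "induced_map snd = (\<lambda>S. the_elem (snd ` S))" by (rule ext) (simp add: induced_map_def)

lemma h1f_hom: "group_hom XB A (h1 \<circ> fst)"
  unfolding group_hom_def group_hom_axioms_def
proof (intro conjI)
  show "group XB" by (rule XB_group)
  show "group A" by (rule A.group_axioms)
  show "h1 \<circ> fst \<in> hom XB A"
    unfolding hom_def
  proof (intro CollectI conjI ballI)
    show "h1 \<circ> fst \<in> carrier XB \<rightarrow> carrier A" using BB_fst by auto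
  next
    fix x y assume "x \<in> carrier XB" "y \<in> carrier XB"
    then show "(h1 \<circ> fst) (x \<otimes>\<^bsub>XB\<^esub> y) = (h1 \<circ> fst) x \<otimes>\<^bsub>A\<^esub> (h1 \<circ> fst) y"
      using BB_fst by (simp add: mult_DirProd' H1.hom_mult)
  qed
qed

lemma h1f_surj: "(h1 \<circ> fst) ` carrier XB = carrier A"
proof -
  have "(h1 \<circ> fst) ` carrier XB = h1 ` (fst ` BB)" by (simp only: XB_carrier image_comp)
  then show ?thesis by (simp only: fst_surj h1s)
qed

lemma kerA1: "kernel XB A (h1 \<circ> fst) = kernel XB (rd_X T) snd <#>\<^bsub>XB\<^esub> kernel XB (rd_X R) fst"
proof
  show "kernel XB A (h1 \<circ> fst) \<subseteq> kernel XB (rd_X T) snd <#>\<^bsub>XB\<^esub> kernel XB (rd_X R) fst"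
  proof
    fix b assume "b \<in> kernel XB A (h1 \<circ> fst)"
    then obtain x t where b: "b = (x, t)" "x \<in> carrier (rd_X R)" "t \<in> carrier (rd_X T)" "h1 x = h2 t"
      "h1 x = \<one>\<^bsub>A\<^esub>" by (auto simp: kernel_def BB_def)
    have k2: "(x, \<one>\<^bsub>rd_X T\<^esub>) \<in> kernel XB (rd_X T) snd" using b by (simp add: kernel_def BB_def)
    have k1: "(\<one>\<^bsub>rd_X R\<^esub>, t) \<in> kernel XB (rd_X R) fst" using b by (simp add: kernel_def BB_def)
    have "b = (x, \<one>\<^bsub>rd_X T\<^esub>) \<otimes>\<^bsub>XB\<^esub> (\<one>\<^bsub>rd_X R\<^esub>, t)" using b by simp
    then show "b \<in> kernel XB (rd_X T) snd <#>\<^bsub>XB\<^esub> kernel XB (rd_X R) fst"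
      unfolding set_mult_def using k1 k2 by blast
  qed
next
  show "kernel XB (rd_X T) snd <#>\<^bsub>XB\<^esub> kernel XB (rd_X R) fst \<subseteq> kernel XB A (h1 \<circ> fst)"
  proof
    fix b assume "b \<in> kernel XB (rd_X T) snd <#>\<^bsub>XB\<^esub> kernel XB (rd_X R) fst"
    then obtain u v where uv: "u \<in> kernel XB (rd_X T) snd" "v \<in> kernel XB (rd_X R) fst" "b = u \<otimes>\<^bsub>XB\<^esub> v"
      unfolding set_mult_def by blast
    have uB: "u \<in> BB" and vB: "v \<in> BB" using uv by (auto simp: kernel_def)
    have bB: "b \<in> BB" using uv(3) subgroup.m_closed[OF BB_sub uB vB] by simp
    have "h1 (fst b) = h1 (fst u)" using uv BB_fst[OF uB] by (simp add: kernel_def mult_DirProd')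
    also have "\<dots> = h2 (snd u)" by (rule BB_h[OF uB])
    also have "\<dots> = \<one>\<^bsub>A\<^esub>" using uv by (simp add: kernel_def)
    finally show "b \<in> kernel XB A (h1 \<circ> fst)" using bB by (simp add: kernel_def)
  qed
qed

lemma kerA2: "kernel XB A (h2 \<circ> snd) = kernel XB A (h1 \<circ> fst)"
  unfolding kernel_def using BB_h by auto

lemma inter_K: "kernel XB (rd_X T) snd \<inter> kernel XB (rd_X R) fst = {\<one>\<^bsub>XB\<^esub>}"
  by (auto simp: kernel_def BB_def)

lemma quot_iso: "induced_map (h1 \<circ> fst) \<in> iso (XB Mod kernel XB A (h1 \<circ> fst)) A"
proof -
  have e: "induced_map (h1 \<circ> fst) = (\<lambda>S. the_elem ((h1 \<circ> fst) ` S))" by (rule ext) (simp add: induced_map_def)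
  show ?thesis unfolding e by (rule group_hom.FactGroup_iso_set[OF h1f_hom h1f_surj])
qed

end


context mt begin

lemma gs_homZ: "y \<in> carrier (rd_Xc T) \<Longrightarrow> gs y \<in> homZ XB"
  unfolding homZ_def gs_def
proof (intro CollectI conjI ballI)
  fix a b assume y: "y \<in> carrier (rd_Xc T)" and a: "a \<in> carrier XB" and b: "b \<in> carrier XB"
  have ab: "a \<otimes>\<^bsub>XB\<^esub> b \<in> BB" using a b by (simp add: subgroup.m_closed[OF BB_sub])
  show "restrict (\<lambda>b. rd_pair T (snd b) y) BB (a \<otimes>\<^bsub>XB\<^esub> b) =
        restrict (\<lambda>b. rd_pair T (snd b) y) BB a + restrict (\<lambda>b. rd_pair T (snd b) y) BB b"
    using ab a b y BB_snd by (simp add: mult_DirProd' rdD(3)[OF TD])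
qed simp

lemma gs_perp: "y \<in> carrier (rd_Xc T) \<Longrightarrow> gs y \<in> perp_X R' (rd_Phi R')"
  unfolding perp_X_def R'_Xc R'_Phi R'_pair
  using gs_homZ Phi_h1 by (auto simp: gs_def BB_def pair_one_l[OF TD])

lemma kill_gen:
  assumes f: "f \<in> homZ XB" and S: "S \<subseteq> BB" and fS: "\<forall>x\<in>S. f x = 0"
  shows "z \<in> generate XB S \<Longrightarrow> f z = 0"
proof (induction rule: generate.induct)
  case one
  show ?case by (rule homZ_one[OF XB_group f])
next
  case (incl h) then show ?case using fS by blast
next
  case (inv h)
  have "h \<in> carrier XB" using inv S by auto
  then have "f (inv\<^bsub>XB\<^esub> h) = - f h" by (rule homZ_invG[OF XB_group f])
  then show ?case using fS inv by simp
next
  case (eng h1 h2)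
  have "h1 \<in> carrier XB" "h2 \<in> carrier XB"
    using group.generate_in_carrier[OF XB_group, of S] S eng.hyps by auto
  then show ?case using homZD[OF f] eng.IH by simp
qed

lemma gs_surj: "f \<in> perp_X R' (rd_Phi R') \<Longrightarrow> \<exists>y\<in>carrier (rd_Xc T). f = gs y"
proof -
  assume "f \<in> perp_X R' (rd_Phi R')"
  then have f: "f \<in> homZ XB" and fz: "\<forall>a\<in>rd_Phi R. f (a, \<one>\<^bsub>rd_X T\<^esub>) = 0"
    unfolding perp_X_def R'_Xc R'_Phi R'_pair by auto
  have S: "(\<lambda>a. (a, \<one>\<^bsub>rd_X T\<^esub>)) ` rd_Phi R \<subseteq> BB" using Phi_h1 by (auto simp: BB_def)
  have kill: "\<forall>k\<in>kernel XB (rd_X T) snd. f k = 0"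
  proof
    fix k assume "k \<in> kernel XB (rd_X T) snd"
    then have "k \<in> top_X R' (rd_Phi R')" by (simp add: top_eq)
    then obtain n :: nat where k: "k \<in> BB" "n > 0" "k [^]\<^bsub>XB\<^esub> n \<in> generate XB ((\<lambda>a. (a, \<one>\<^bsub>rd_X T\<^esub>)) ` rd_Phi R)"
      unfolding top_X_def R'_X R'_Phi by auto
    have "f (k [^]\<^bsub>XB\<^esub> n) = 0" by (rule kill_gen[OF f S _ k(3)]) (use fz in auto)
    then have "int n * f k = 0" using homZ_npowG[OF XB_group f, of k n] k(1) by simp
    then show "f k = 0" using k(2) by simp
  qed
  obtain \<phi> where \<phi>: "\<phi> \<in> homZ (rd_X T)" "\<forall>g\<in>carrier XB. f g = \<phi> (snd g)"
    using factor_homZ[OF snd_hom _ f kill] snd_surj by auto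
  obtain y where y: "y \<in> carrier (rd_Xc T)" "\<forall>t\<in>carrier (rd_X T). \<phi> t = rd_pair T t y"
    using surj_r[OF TD \<phi>(1)] by blast
  have "f = gs y"
  proof (rule homZ_eqI[OF f gs_homZ[OF y(1)]])
    fix x assume "x \<in> carrier XB"
    then show "f x = gs y x" using \<phi>(2) y(2) BB_snd by (simp add: gs_def)
  qed
  then show ?thesis using y(1) by blast
qed

lemma gs_inj: "inj_on gs (carrier (rd_Xc T))"
proof (rule inj_onI)
  fix y y' assume y: "y \<in> carrier (rd_Xc T)" and y': "y' \<in> carrier (rd_Xc T)" and e: "gs y = gs y'"
  show "y = y'"
  proof (rule inj_r[OF TD y y'])
    fix t assume "t \<in> carrier (rd_X T)"
    then obtain b where b: "b \<in> BB" "t = snd b" using snd_surj by blast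
    have "gs y b = gs y' b" using e by simp
    then show "rd_pair T t y = rd_pair T t y'" using b by (simp add: gs_def)
  qed
qed

lemma rad_iso: "rd_iso (rd_rad R') T (induced_map snd)"
  unfolding rd_iso_def
proof (intro conjI exI)
  have e: "rd_X (rd_rad R') = XB Mod kernel XB (rd_X T) snd"
    by (simp add: rd_rad_def R'_X top_eq)
  show "induced_map snd \<in> iso (rd_X (rd_rad R')) (rd_X T)"
    unfolding e im_snd by (rule group_hom.FactGroup_iso_set[OF snd_hom]) (simp add: snd_surj)
  show "induced_map snd ` rd_Phi (rd_rad R') = rd_Phi T" by (simp add: rd_rad_def TPhi)
  show "gs ` rd_Phic T = rd_Phic (rd_rad R')" by (simp add: rd_rad_def TPhi)
  have XcE: "rd_Xc (rd_rad R') = (homZ_group XB)\<lparr>carrier := perp_X R' (rd_Phi R')\<rparr>"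
    by (simp add: rd_rad_def R'_Xc)
  show "gs \<in> iso (rd_Xc T) (rd_Xc (rd_rad R'))"
    unfolding XcE iso_def
  proof (intro CollectI conjI)
    show "gs \<in> hom (rd_Xc T) ((homZ_group XB)\<lparr>carrier := perp_X R' (rd_Phi R')\<rparr>)"
      unfolding hom_def
    proof (intro CollectI conjI ballI)
      show "gs \<in> carrier (rd_Xc T) \<rightarrow> carrier ((homZ_group XB)\<lparr>carrier := perp_X R' (rd_Phi R')\<rparr>)"
        using gs_perp by auto
    next
      fix y y' assume y: "y \<in> carrier (rd_Xc T)" and y': "y' \<in> carrier (rd_Xc T)"
      show "gs (y \<otimes>\<^bsub>rd_Xc T\<^esub> y') = gs y \<otimes>\<^bsub>(homZ_group XB)\<lparr>carrier := perp_X R' (rd_Phi R')\<rparr>\<^esub> gs y'"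
        unfolding gs_def using y y' BB_snd
        by (simp add: homZ_group_def rdD(4)[OF TD] cong: restrict_cong)
    qed
    show "bij_betw gs (carrier (rd_Xc T)) (carrier ((homZ_group XB)\<lparr>carrier := perp_X R' (rd_Phi R')\<rparr>))"
      unfolding bij_betw_def using gs_inj gs_perp gs_surj by auto
  qed
  show "\<forall>x\<in>carrier (rd_X (rd_rad R')). \<forall>y\<in>carrier (rd_Xc T).
          rd_pair (rd_rad R') x (gs y) = rd_pair T (induced_map snd x) y"
  proof (intro ballI)
    fix C y assume C: "C \<in> carrier (rd_X (rd_rad R'))" and y: "y \<in> carrier (rd_Xc T)"
    then have C': "C \<in> carrier (XB Mod kernel XB (rd_X T) snd)" using e by simp
    obtain b where b: "b \<in> BB" "induced_map snd C = snd b" "(SOME x. x \<in> C) \<in> BB" "snd (SOME x. x \<in> C) = snd b"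
      using coset_props[OF snd_hom C'] by blast
    show "rd_pair (rd_rad R') C (gs y) = rd_pair T (induced_map snd C) y"
      using b by (simp add: rd_rad_def quot_pair_def R'_pair gs_def)
  qed
qed

end


context mt begin

lemma coset_im:
  assumes p: "group_hom XB H p" and b: "b \<in> BB"
  shows "induced_map p (kernel XB H p #>\<^bsub>XB\<^esub> b) = p b"
proof -
  interpret p: group_hom XB H p by fact
  have mem: "p x = p b" if x: "x \<in> kernel XB H p #>\<^bsub>XB\<^esub> b" for x
  proof -
    from x obtain k where k: "k \<in> kernel XB H p" "x = k \<otimes>\<^bsub>XB\<^esub> b" unfolding r_coset_def by blast
    have kB: "k \<in> BB" using k(1) by (simp add: kernel_def)
    show "p x = p b" using k kB b p.hom_mult by (simp add: kernel_def)
  qed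
  have bC: "b \<in> kernel XB H p #>\<^bsub>XB\<^esub> b"
  proof -
    have "\<one>\<^bsub>XB\<^esub> \<in> kernel XB H p" unfolding kernel_def using p.G.one_closed p.hom_one by blast
    then have "\<one>\<^bsub>XB\<^esub> \<otimes>\<^bsub>XB\<^esub> b \<in> kernel XB H p #>\<^bsub>XB\<^esub> b" unfolding r_coset_def by blast
    then show ?thesis using b p.G.l_one[of b] by simp
  qed
  have img: "p ` (kernel XB H p #>\<^bsub>XB\<^esub> b) = {p b}" using mem bC by blast
  show ?thesis unfolding induced_map_def img by simp
qed

lemma gd_homZ: "y \<in> carrier (rd_Xc R) \<Longrightarrow> gd y \<in> homZ XB"
  unfolding homZ_def gd_def
proof (intro CollectI conjI ballI)
  fix a b assume y: "y \<in> carrier (rd_Xc R)" and a: "a \<in> carrier XB" and b: "b \<in> carrier XB"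
  have ab: "a \<otimes>\<^bsub>XB\<^esub> b \<in> BB" using a b by (simp add: subgroup.m_closed[OF BB_sub])
  show "restrict (\<lambda>b. rd_pair R (fst b) y) BB (a \<otimes>\<^bsub>XB\<^esub> b) =
        restrict (\<lambda>b. rd_pair R (fst b) y) BB a + restrict (\<lambda>b. rd_pair R (fst b) y) BB b"
    using ab a b y BB_fst by (simp add: mult_DirProd' rdD(3)[OF RD])
qed simp

lemma gd_mult: "y \<in> carrier (rd_Xc R) \<Longrightarrow> y' \<in> carrier (rd_Xc R) \<Longrightarrow>
   gd (y \<otimes>\<^bsub>rd_Xc R\<^esub> y') = gd y \<otimes>\<^bsub>homZ_group XB\<^esub> gd y'"
  unfolding gd_def using BB_fst by (simp add: rdD(4)[OF RD] cong: restrict_cong)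

lemma gd_hom: "group_hom (rd_Xc R) (homZ_group XB) gd"
  unfolding group_hom_def group_hom_axioms_def
proof (intro conjI)
  show "group (rd_Xc R)" by (rule Xc.group_axioms)
  show "group (homZ_group XB)" using homZ_group_cg[OF XB_group] by (rule comm_group.axioms(2))
  show "gd \<in> hom (rd_Xc R) (homZ_group XB)"
    unfolding hom_def using gd_homZ gd_mult by auto
qed

lemma gen_map: "z \<in> generate (rd_Xc R) (rd_Phic R) \<Longrightarrow> gd z \<in> generate (homZ_group XB) (gd ` rd_Phic R)"
proof (induction rule: generate.induct)
  case one
  show ?case by (subst group_hom.hom_one[OF gd_hom]) (rule generate.one)
next
  case (incl h) then show ?case by (intro generate.incl) simp
next
  case (inv h)
  have "h \<in> carrier (rd_Xc R)" using inv rdD(9)[OF RD] by blast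
  then have e: "gd (inv\<^bsub>rd_Xc R\<^esub> h) = inv\<^bsub>homZ_group XB\<^esub> (gd h)" by (rule group_hom.hom_inv[OF gd_hom])
  show ?case by (subst e) (rule generate.inv, simp add: inv)
next
  case (eng h1 h2)
  have "h1 \<in> carrier (rd_Xc R)" "h2 \<in> carrier (rd_Xc R)"
    using Xc.generate_in_carrier[OF rdD(9)[OF RD]] eng.hyps by auto
  then have e: "gd (h1 \<otimes>\<^bsub>rd_Xc R\<^esub> h2) = gd h1 \<otimes>\<^bsub>homZ_group XB\<^esub> gd h2" by (rule gd_mult)
  show ?case by (subst e) (rule generate.eng[OF eng.IH])
qed

lemma gd_top: "y \<in> carrier (rd_Xc R) \<Longrightarrow> gd y \<in> top_Xc R' (rd_Phic R')"
proof -
  assume y: "y \<in> carrier (rd_Xc R)"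
  interpret RC: rdc R cc by (rule rdc_cc)
  obtain n :: nat where n: "n > 0" "y [^]\<^bsub>rd_Xc R\<^esub> n \<in> generate (rd_Xc R) (rd_Phic R)"
    using RC.H2[OF SS y] by blast
  have "gd (y [^]\<^bsub>rd_Xc R\<^esub> n) = gd y [^]\<^bsub>homZ_group XB\<^esub> n"
    by (rule group_hom.hom_nat_pow[OF gd_hom y])
  then have "gd y [^]\<^bsub>homZ_group XB\<^esub> n \<in> generate (homZ_group XB) (gd ` rd_Phic R)"
    using gen_map[OF n(2)] by (simp only:)
  then show ?thesis unfolding top_Xc_def R'_Xc R'_Phic using n(1) gd_homZ[OF y] by auto
qed

lemma kill_genZ:
  assumes k: "k \<in> kernel XB (rd_X R) fst"
  shows "f \<in> generate (homZ_group XB) (gd ` rd_Phic R) \<Longrightarrow> f k = 0"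
proof (induction rule: generate.induct)
  have kB: "k \<in> BB" and k1: "fst k = \<one>\<^bsub>rd_X R\<^esub>" using k by (auto simp: kernel_def)
  {
    case one show ?case using kB by simp
  next
    case (incl h)
    then obtain y where "y \<in> rd_Phic R" "h = gd y" by blast
    then show ?case using kB k1 pair_one_l[OF RD] rdD(9)[OF RD] by (auto simp: gd_def)
  next
    case (inv h)
    then obtain y where y: "y \<in> rd_Phic R" "h = gd y" by blast
    have yc: "y \<in> carrier (rd_Xc R)" using y(1) rdD(9)[OF RD] by blast
    have "inv\<^bsub>homZ_group XB\<^esub> h = restrict (\<lambda>x. - h x) BB"
      using homZ_inv[OF XB_group gd_homZ[OF yc]] y(2) by simp
    then show ?case using kB k1 y pair_one_l[OF RD yc] by (simp add: gd_def)
  next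
    case (eng h1 h2)
    then show ?case using kB by simp
  }
qed

lemma gd_surj: "f \<in> top_Xc R' (rd_Phic R') \<Longrightarrow> \<exists>y\<in>carrier (rd_Xc R). f = gd y"
proof -
  assume "f \<in> top_Xc R' (rd_Phic R')"
  then obtain n :: nat where f: "f \<in> homZ XB" "n > 0"
      "f [^]\<^bsub>homZ_group XB\<^esub> n \<in> generate (homZ_group XB) (gd ` rd_Phic R)"
    unfolding top_Xc_def R'_Xc R'_Phic by auto
  have kill: "\<forall>k\<in>kernel XB (rd_X R) fst. f k = 0"
  proof
    fix k assume k: "k \<in> kernel XB (rd_X R) fst"
    have kB: "k \<in> carrier XB" using k by (simp add: kernel_def)
    have "(f [^]\<^bsub>homZ_group XB\<^esub> n) k = 0" by (rule kill_genZ[OF k f(3)])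
    then have "int n * f k = 0" using homZ_pow[OF XB_group f(1) kB, of n] by simp
    then show "f k = 0" using f(2) by simp
  qed
  obtain \<phi> where \<phi>: "\<phi> \<in> homZ (rd_X R)" "\<forall>g\<in>carrier XB. f g = \<phi> (fst g)"
    using factor_homZ[OF fst_hom _ f(1) kill] fst_surj by auto
  obtain y where y: "y \<in> carrier (rd_Xc R)" "\<forall>x\<in>carrier (rd_X R). \<phi> x = rd_pair R x y"
    using surj_r[OF RD \<phi>(1)] by blast
  have "f = gd y"
  proof (rule homZ_eqI[OF f(1) gd_homZ[OF y(1)]])
    fix x assume "x \<in> carrier XB"
    then show "f x = gd y x" using \<phi>(2) y(2) BB_fst by (simp add: gd_def)
  qed
  then show ?thesis using y(1) by blast
qed

lemma gd_inj: "inj_on gd (carrier (rd_Xc R))"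
proof (rule inj_onI)
  fix y y' assume y: "y \<in> carrier (rd_Xc R)" and y': "y' \<in> carrier (rd_Xc R)" and e: "gd y = gd y'"
  show "y = y'"
  proof (rule inj_r[OF RD y y'])
    fix x assume "x \<in> carrier (rd_X R)"
    then obtain b where b: "b \<in> BB" "x = fst b" using fst_surj by blast
    have "gd y b = gd y' b" using e by simp
    then show "rd_pair R x y = rd_pair R x y'" using b by (simp add: gd_def)
  qed
qed

lemma der_iso: "rd_iso (rd_der R') R (induced_map fst)"
  unfolding rd_iso_def
proof (intro conjI exI)
  have e: "rd_X (rd_der R') = XB Mod kernel XB (rd_X R) fst"
    by (simp add: rd_der_def R'_X perp_eq)
  show "induced_map fst \<in> iso (rd_X (rd_der R')) (rd_X R)"
    unfolding e im_fst by (rule group_hom.FactGroup_iso_set[OF fst_hom]) (simp add: fst_surj)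
  have PhiE: "rd_Phi (rd_der R') = (\<lambda>a. kernel XB (rd_X R) fst #>\<^bsub>XB\<^esub> (a, \<one>\<^bsub>rd_X T\<^esub>)) ` rd_Phi R"
    by (simp add: rd_der_def R'_X perp_eq R'_Phi image_image)
  show "induced_map fst ` rd_Phi (rd_der R') = rd_Phi R"
    unfolding PhiE image_image
  proof (rule trans[OF image_cong[OF refl] image_ident])
    fix a assume a: "a \<in> rd_Phi R"
    have "(a, \<one>\<^bsub>rd_X T\<^esub>) \<in> BB" using Phi_h1[OF a] by (simp add: BB_def)
    then show "induced_map fst (kernel XB (rd_X R) fst #>\<^bsub>XB\<^esub> (a, \<one>\<^bsub>rd_X T\<^esub>)) = a"
      using coset_im[OF fst_hom] by simp
  qed
  show "gd ` rd_Phic R = rd_Phic (rd_der R')" by (simp add: rd_der_def R'_Phic)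
  have XcE: "rd_Xc (rd_der R') = (homZ_group XB)\<lparr>carrier := top_Xc R' (rd_Phic R')\<rparr>"
    by (simp add: rd_der_def R'_Xc)
  show "gd \<in> iso (rd_Xc R) (rd_Xc (rd_der R'))"
    unfolding XcE iso_def
  proof (intro CollectI conjI)
    show "gd \<in> hom (rd_Xc R) ((homZ_group XB)\<lparr>carrier := top_Xc R' (rd_Phic R')\<rparr>)"
      unfolding hom_def
    proof (intro CollectI conjI ballI)
      show "gd \<in> carrier (rd_Xc R) \<rightarrow> carrier ((homZ_group XB)\<lparr>carrier := top_Xc R' (rd_Phic R')\<rparr>)"
        using gd_top by auto
    next
      fix y y' assume y: "y \<in> carrier (rd_Xc R)" and y': "y' \<in> carrier (rd_Xc R)"
      show "gd (y \<otimes>\<^bsub>rd_Xc R\<^esub> y') = gd y \<otimes>\<^bsub>(homZ_group XB)\<lparr>carrier := top_Xc R' (rd_Phic R')\<rparr>\<^esub> gd y'"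
        using gd_mult[OF y y'] by (simp add: homZ_group_def)
    qed
    show "bij_betw gd (carrier (rd_Xc R)) (carrier ((homZ_group XB)\<lparr>carrier := top_Xc R' (rd_Phic R')\<rparr>))"
      unfolding bij_betw_def using gd_inj gd_top gd_surj by auto
  qed
  show "\<forall>x\<in>carrier (rd_X (rd_der R')). \<forall>y\<in>carrier (rd_Xc R).
          rd_pair (rd_der R') x (gd y) = rd_pair R (induced_map fst x) y"
  proof (intro ballI)
    fix C y assume C: "C \<in> carrier (rd_X (rd_der R'))" and y: "y \<in> carrier (rd_Xc R)"
    then have C': "C \<in> carrier (XB Mod kernel XB (rd_X R) fst)" using e by simp
    obtain b where b: "b \<in> BB" "induced_map fst C = fst b" "(SOME x. x \<in> C) \<in> BB" "fst (SOME x. x \<in> C) = fst b"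
      using coset_props[OF fst_hom C'] by blast
    show "rd_pair (rd_der R') C (gd y) = rd_pair R (induced_map fst C) y"
      using b by (simp add: rd_der_def quot_pair_def R'_pair gd_def)
  qed
qed

end


theorem mainTheorem7:
  fixes R :: "('a, 'b) root_datum" and T :: "('c, 'd) root_datum" and A :: "'e monoid"
    and h1 :: "'a \<Rightarrow> 'e" and h2 :: "'c \<Rightarrow> 'e"
  assumes "root_datum R" and "semisimple R"
    and "root_datum T" and "rd_torus T"
    and "comm_group A" and "finite (carrier A)"
    and "h1 \<in> hom (rd_X R) A" and "h1 ` carrier (rd_X R) = carrier A"
    and "h2 \<in> hom (rd_X T) A" and "h2 ` carrier (rd_X T) = carrier A"
    and "rd_Phi R \<subseteq> kernel (rd_X R) A h1"
  defines "R' \<equiv> central_prod R T h1 h2"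
  shows "kernel (rd_X R') (rd_X R) fst = perp_Xc R' (rd_Phic R') \<and>
         rd_iso (rd_der R') R (induced_map fst) \<and>
         kernel (rd_X R') (rd_X T) snd = top_X R' (rd_Phi R') \<and>
         rd_iso (rd_rad R') T (induced_map snd) \<and>
         (\<forall>b\<in>carrier (rd_X R'). h1 (fst b) = h2 (snd b)) \<and>
         kernel (rd_X R') A (h1 \<circ> fst) = top_X R' (rd_Phi R') <#>\<^bsub>rd_X R'\<^esub> perp_Xc R' (rd_Phic R') \<and>
         kernel (rd_X R') A (h2 \<circ> snd) = top_X R' (rd_Phi R') <#>\<^bsub>rd_X R'\<^esub> perp_Xc R' (rd_Phic R') \<and>
         top_X R' (rd_Phi R') \<inter> perp_Xc R' (rd_Phic R') = {\<one>\<^bsub>rd_X R'\<^esub>} \<and>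
         induced_map (h1 \<circ> fst) \<in>
           iso (rd_X R' Mod (top_X R' (rd_Phi R') <#>\<^bsub>rd_X R'\<^esub> perp_Xc R' (rd_Phic R'))) A"
proof -
  interpret M: mt R T A h1 h2
    by (rule mt.intro[OF assms(1-5,7-11)])
  have X': "rd_X R' = M.XB" unfolding R'_def by (rule M.R'_X)
  have perp: "perp_Xc R' (rd_Phic R') = kernel M.XB (rd_X R) fst" unfolding R'_def by (rule M.perp_eq)
  have top: "top_X R' (rd_Phi R') = kernel M.XB (rd_X T) snd" unfolding R'_def by (rule M.top_eq)
  have k1: "kernel M.XB A (h1 \<circ> fst) = top_X R' (rd_Phi R') <#>\<^bsub>rd_X R'\<^esub> perp_Xc R' (rd_Phic R')"
    unfolding X' perp top by (rule M.kerA1)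
  show ?thesis
  proof (intro conjI)
    show "kernel (rd_X R') (rd_X R) fst = perp_Xc R' (rd_Phic R')" unfolding X' perp ..
    show "rd_iso (rd_der R') R (induced_map fst)" unfolding R'_def by (rule M.der_iso)
    show "kernel (rd_X R') (rd_X T) snd = top_X R' (rd_Phi R')" unfolding X' top ..
    show "rd_iso (rd_rad R') T (induced_map snd)" unfolding R'_def by (rule M.rad_iso)
    show "\<forall>b\<in>carrier (rd_X R'). h1 (fst b) = h2 (snd b)" unfolding X' using M.BB_h by simp
    show "kernel (rd_X R') A (h1 \<circ> fst) = top_X R' (rd_Phi R') <#>\<^bsub>rd_X R'\<^esub> perp_Xc R' (rd_Phic R')"
      unfolding X' using k1 by (simp only: X')
    show "kernel (rd_X R') A (h2 \<circ> snd) = top_X R' (rd_Phi R') <#>\<^bsub>rd_X R'\<^esub> perp_Xc R' (rd_Phic R')"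
      unfolding X' M.kerA2 using k1 by (simp only: X')
    show "top_X R' (rd_Phi R') \<inter> perp_Xc R' (rd_Phic R') = {\<one>\<^bsub>rd_X R'\<^esub>}"
      unfolding X' perp top by (rule M.inter_K)
    show "induced_map (h1 \<circ> fst) \<in>
           iso (rd_X R' Mod (top_X R' (rd_Phi R') <#>\<^bsub>rd_X R'\<^esub> perp_Xc R' (rd_Phic R'))) A"
      using M.quot_iso k1 unfolding X' by (simp only: X')
  qed
qed

end
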